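(* Fix $\lambda>0$ and let $\phi:\mathbb R\to\mathbb R$ be Lipschitz with lower bound $l_\phi\ge0$ (i.e. $\phi\ge l_\phi$). Then there exists a solution $V^{\lambda,\phi}$ of $$(\mathcal L-r)v+f-\lambda e^{-(\phi-v)/\lambda}=0\quad\text{on }\mathbb R$$ such that $V^{\lambda,\phi}\in\mathcal C^{2,\alpha}_{loc}(\mathbb R)$ for every $\alpha\in(0,1)$ and $\limsup_{|x|\to\infty}|V^{\lambda,\phi}(x)/x|<\infty$.
   Context: Standing assumptions: $b,\sigma:\mathbb R\to\mathbb R$ with $|b(x)-b(y)|+|\sigma(x)-\sigma(y)|\le L|x-y|$ for some $L>0$, and $|\sigma(x)|\ge\sigma_0>0$; $f:\mathbb R\to[0,\infty)$, $f(0)=0$, $f$ is $L_f$-Lipschitz; $l:\mathbb R\to\mathbb R$ satisfies: there is $K>0$ with $\inf l=l(0)=K$ and $l(x)+l(y)\ge l(x+y)+K$, $l(\xi)\to\infty$ as $|\xi|\to\infty$, $l$ is $L_l$-Lipschitz; with $G=L+\frac12L^2$, the discount rate satisfies $0<r-G<L_f/L_l$. $\mathcal L v=bv'+\frac12\sigma^2v''$. $\mathcal C^{2,\alpha}_{loc}(\mathbb R)$ is the space of functions whose restriction to every bounded open set is $\mathcal C^2$ with $\alpha$-Hölder continuous second derivative. *)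

theory Defs
  imports "HOL-Analysis.Analysis"
begin

definition lipschitz_real :: "(real \<Rightarrow> real) \<Rightarrow> bool" where
  "lipschitz_real g \<longleftrightarrow> (\<exists>C. \<forall>x y. \<bar>g x - g y\<bar> \<le> C * \<bar>x - y\<bar>)"

text \<open>Membership in C^{2,alpha}_loc(R): twice differentiable everywhere, and the
  second derivative is alpha-Hoelder continuous on every bounded interval
  (hence on every bounded open set).\<close>
definition C2_alpha_loc :: "real \<Rightarrow> (real \<Rightarrow> real) \<Rightarrow> bool" where
  "C2_alpha_loc \<alpha> v \<longleftrightarrow>
     (\<exists>v' v''. (\<forall>x. (v has_real_derivative v' x) (at x)) \<and>
              (\<forall>x. (v' has_real_derivative v'' x) (at x)) \<and>
              (\<forall>a c. \<exists>C. \<forall>x\<in>{a..c}. \<forall>y\<in>{a..c}. \<bar>v'' x - v'' y\<bar> \<le> C * \<bar>x - y\<bar> powr \<alpha>))"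

definition linear_growth :: "(real \<Rightarrow> real) \<Rightarrow> bool" where
  "linear_growth v \<longleftrightarrow> (\<exists>M R. \<forall>x. \<bar>x\<bar> \<ge> R \<longrightarrow> \<bar>v x / x\<bar> \<le> M)"

end

theory Submission
  imports Defs "HOL-Analysis.Analysis"
begin

definition cl :: "real \<Rightarrow> real \<Rightarrow> real \<Rightarrow> real" where
  "cl a c x = max a (min c x)"

lemma cl_in: "a \<le> c \<Longrightarrow> cl a c x \<in> {a..c}"
  by (auto simp: cl_def)

lemma cl_id: "x \<in> {a..c} \<Longrightarrow> cl a c x = x"
  by (auto simp: cl_def)

lemma cl_cont: "continuous_on UNIV (cl a c)"
  unfolding cl_def by (intro continuous_intros)

lemma exp_int:
  fixes lam :: real
  assumes "lam > 0" "a \<le> u"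
  shows "((\<lambda>t. exp (lam * (t - a))) has_integral (exp (lam * (u - a)) - 1) / lam) {a..u}"
proof -
  have "((\<lambda>t. exp (lam * (t - a))) has_integral
        (exp (lam * (u - a)) / lam - exp (lam * (a - a)) / lam)) {a..u}"
  proof (rule fundamental_theorem_of_calculus[OF assms(2)])
    fix x assume "x \<in> {a..u}"
    have "((\<lambda>t. exp (lam * (t - a)) / lam) has_real_derivative
          exp (lam * (x - a)) * (lam * 1) / lam) (at x within {a..u})"
      by (auto intro!: derivative_eq_intros)
    then show "((\<lambda>t. exp (lam * (t - a)) / lam) has_vector_derivative exp (lam * (x - a)))
        (at x within {a..u})"
      using assms(1) by (simp add: has_real_derivative_iff_has_vector_derivative)
  qed
  then show ?thesis by (simp add: diff_divide_distrib)
qed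

lemma ivp:
  fixes F :: "real \<Rightarrow> 'b::banach \<Rightarrow> 'b"
  assumes ac: "a \<le> c" and K: "K > 0"
    and contF: "\<And>Y. continuous_on {a..c} Y \<Longrightarrow> continuous_on {a..c} (\<lambda>t. F t (Y t))"
    and lip: "\<And>t y z. t \<in> {a..c} \<Longrightarrow> norm (F t y - F t z) \<le> K * norm (y - z)"
  obtains Sol where "\<And>y0. continuous_on {a..c} (Sol y0)"
    "\<And>y0 x. x \<in> {a..c} \<Longrightarrow> Sol y0 x = y0 + integral {a..x} (\<lambda>t. F t (Sol y0 t))"
    "\<And>y0 y1 x. x \<in> {a..c} \<Longrightarrow>
        norm (Sol y0 x - Sol y1 x) \<le> 2 * exp (2*K*(c-a)) * norm (y0 - y1)"
proof -
  define lam where "lam = 2 * K"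
  have lam: "lam > 0" using K by (simp add: lam_def)
  define e where "e t = exp (lam * (t - a))" for t
  define G where "G Z t = F t (e t *\<^sub>R apply_bcontfun Z t)" for Z :: "real \<Rightarrow>\<^sub>C 'b" and t
  define raw where "raw y0 Z x = exp (- lam * (cl a c x - a)) *\<^sub>R
      (y0 + integral {a..cl a c x} (G Z))" for y0 Z x
  have contG: "continuous_on {a..c} (G Z)" for Z
    unfolding G_def e_def
    by (rule contF) (intro continuous_intros continuous_on_subset[OF continuous_on_apply_bcontfun], auto)
  have intG: "G Z integrable_on {a..u}" if "u \<in> {a..c}" for Z u
    using contG that by (meson atLeastAtMost_iff atLeastatMost_subset_iff integrable_continuous_real
        integrable_on_subinterval order_refl)
  have raw_bc: "raw y0 Z \<in> bcontfun" for y0 Z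
  proof -
    define h where "h u = exp (- lam * (u - a)) *\<^sub>R (y0 + integral {a..u} (G Z))" for u
    have ch: "continuous_on {a..c} h"
      unfolding h_def
      by (intro continuous_intros indefinite_integral_continuous_1 integrable_continuous_real contG)
    have eq: "raw y0 Z = h \<circ> cl a c"
      by (auto simp: raw_def h_def)
    have "continuous_on UNIV (h \<circ> cl a c)"
      by (rule continuous_on_compose[OF cl_cont continuous_on_subset[OF ch]]) (use cl_in[OF ac] in auto)
    moreover have "bounded (range (h \<circ> cl a c))"
    proof -
      have "range (h \<circ> cl a c) \<subseteq> h ` {a..c}" using cl_in[OF ac] by auto
      moreover have "bounded (h ` {a..c})"
        by (intro compact_imp_bounded compact_continuous_image ch) auto
      ultimately show ?thesis using bounded_subset by blast
    qed
    ultimately show ?thesis unfolding bcontfun_def eq by simp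
  qed
  define Phi where "Phi y0 Z = Bcontfun (raw y0 Z)" for y0 Z
  have Phi_app: "apply_bcontfun (Phi y0 Z) = raw y0 Z" for y0 Z
    unfolding Phi_def using raw_bc Bcontfun_inverse by blast
  have contr: "dist (Phi y0 Z1) (Phi y0 Z2) \<le> (1/2) * dist Z1 Z2" for y0 Z1 Z2
  proof (rule dist_bound)
    fix x
    define u where "u = cl a c x"
    have u: "u \<in> {a..c}" using cl_in[OF ac] u_def by simp
    define d where "d = dist Z1 Z2"
    have "norm (G Z1 t - G Z2 t) \<le> K * d * e t" if "t \<in> {a..u}" for t
    proof -
      have "norm (G Z1 t - G Z2 t) \<le> K * norm (e t *\<^sub>R apply_bcontfun Z1 t - e t *\<^sub>R apply_bcontfun Z2 t)"
        unfolding G_def using lip that u by auto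
      also have "\<dots> = K * (e t * dist (apply_bcontfun Z1 t) (apply_bcontfun Z2 t))"
        by (simp add: dist_norm e_def flip: scaleR_diff_right)
      also have "\<dots> \<le> K * (e t * d)"
        using K dist_bounded[of Z1 t Z2] unfolding d_def e_def
        by (intro mult_left_mono) auto
      finally show ?thesis by (simp add: algebra_simps)
    qed
    then have "norm (integral {a..u} (\<lambda>t. G Z1 t - G Z2 t)) \<le> integral {a..u} (\<lambda>t. K * d * e t)"
      using u unfolding e_def
      by (intro integral_norm_bound_integral integrable_diff intG integrable_continuous_real
          continuous_intros) auto
    also have "\<dots> = K * d * ((e u - 1) / lam)"
      using exp_int[OF lam, of a u] u unfolding e_def
      by (simp add: integral_unique)
    finally have I: "norm (integral {a..u} (G Z1) - integral {a..u} (G Z2)) \<le> K * d * ((e u - 1) / lam)"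
      using intG u by (simp add: integral_diff)
    have "dist (apply_bcontfun (Phi y0 Z1) x) (apply_bcontfun (Phi y0 Z2) x)
        = exp (- lam * (u - a)) * norm (integral {a..u} (G Z1) - integral {a..u} (G Z2))"
      unfolding Phi_app raw_def u_def[symmetric] dist_norm
      by (simp flip: scaleR_diff_right)
    also have "\<dots> \<le> exp (- lam * (u - a)) * (K * d * ((e u - 1) / lam))"
      by (intro mult_left_mono I) auto
    also have "\<dots> = K * d * (1 - exp (- lam * (u - a))) / lam"
      unfolding e_def using lam
      by (simp add: field_simps flip: exp_add)
    also have "\<dots> \<le> K * d / lam"
    proof -
      have "d * (1 - exp (- lam * (u - a))) \<le> d * 1"
        using d_def by (intro mult_left_mono) auto
      then show ?thesis using K lam by (intro divide_right_mono) (auto simp: mult.assoc)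
    qed
    also have "\<dots> = (1/2) * dist Z1 Z2" using K by (simp add: lam_def d_def)
    finally show "dist (apply_bcontfun (Phi y0 Z1) x) (apply_bcontfun (Phi y0 Z2) x) \<le> (1/2) * dist Z1 Z2" .
  qed
  have ex1: "\<exists>!Z. Phi y0 Z = Z" for y0
    using Banach_fix[of UNIV "1/2" "Phi y0"] contr complete_UNIV by auto
  define Zf where "Zf y0 = (THE Z. Phi y0 Z = Z)" for y0
  have Zf: "Phi y0 (Zf y0) = Zf y0" for y0
    unfolding Zf_def using theI'[OF ex1] .
  define Sol where "Sol y0 t = e t *\<^sub>R apply_bcontfun (Zf y0) t" for y0 t
  show ?thesis
  proof
    show "continuous_on {a..c} (Sol y0)" for y0
      unfolding Sol_def e_def by (intro continuous_intros continuous_on_subset[OF continuous_on_apply_bcontfun]) auto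
  next
    fix y0 x assume x: "x \<in> {a..c}"
    have "apply_bcontfun (Zf y0) x = raw y0 (Zf y0) x"
      using Zf[of y0] Phi_app by metis
    also have "\<dots> = exp (- lam * (x - a)) *\<^sub>R (y0 + integral {a..x} (\<lambda>t. F t (Sol y0 t)))"
      unfolding raw_def cl_id[OF x] G_def Sol_def ..
    finally show "Sol y0 x = y0 + integral {a..x} (\<lambda>t. F t (Sol y0 t))"
      unfolding Sol_def e_def by (simp flip: exp_add)
  next
    fix y0 y1 x assume x: "x \<in> {a..c}"
    define d where "d = dist (Zf y0) (Zf y1)"
    have d2: "dist (Phi y0 (Zf y1)) (Phi y1 (Zf y1)) \<le> norm (y0 - y1)"
    proof (rule dist_bound)
      fix t
      have "dist (apply_bcontfun (Phi y0 (Zf y1)) t) (apply_bcontfun (Phi y1 (Zf y1)) t)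
          = exp (- lam * (cl a c t - a)) * norm (y0 - y1)"
        unfolding Phi_app raw_def dist_norm by (simp flip: scaleR_diff_right)
      also have "\<dots> \<le> 1 * norm (y0 - y1)"
        using cl_in[OF ac, of t] lam by (intro mult_right_mono) auto
      finally show "dist (apply_bcontfun (Phi y0 (Zf y1)) t) (apply_bcontfun (Phi y1 (Zf y1)) t) \<le> norm (y0 - y1)" by simp
    qed
    have "d = dist (Phi y0 (Zf y0)) (Phi y1 (Zf y1))" unfolding d_def using Zf by metis
    also have "\<dots> \<le> dist (Phi y0 (Zf y0)) (Phi y0 (Zf y1)) + dist (Phi y0 (Zf y1)) (Phi y1 (Zf y1))"
      by (rule dist_triangle)
    also have "\<dots> \<le> (1/2) * d + norm (y0 - y1)"
      using contr d2 d_def by (intro add_mono) auto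
    finally have dle: "d \<le> 2 * norm (y0 - y1)" by simp
    have "norm (Sol y0 x - Sol y1 x) = e x * dist (apply_bcontfun (Zf y0) x) (apply_bcontfun (Zf y1) x)"
      unfolding Sol_def dist_norm e_def by (simp flip: scaleR_diff_right)
    also have "\<dots> \<le> exp (2*K*(c-a)) * d"
      using x K dist_bounded[of "Zf y0" x "Zf y1"] unfolding e_def d_def lam_def
      by (intro mult_mono) auto
    also have "\<dots> \<le> exp (2*K*(c-a)) * (2 * norm (y0 - y1))"
      using dle by (intro mult_left_mono) auto
    finally show "norm (Sol y0 x - Sol y1 x) \<le> 2 * exp (2*K*(c-a)) * norm (y0 - y1)" by simp
  qed
qed

lemma maxp:
  fixes D D1 D2 :: "real \<Rightarrow> real"
  assumes ac: "a \<le> c" and cont: "continuous_on {a..c} D"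
    and d1: "\<And>x. x \<in> {a<..<c} \<Longrightarrow> (D has_real_derivative D1 x) (at x)"
    and d2: "\<And>x. x \<in> {a<..<c} \<Longrightarrow> (D1 has_real_derivative D2 x) (at x)"
    and Da: "D a \<le> 0" and Dc: "D c \<le> 0"
    and key: "\<And>x. x \<in> {a<..<c} \<Longrightarrow> D x > 0 \<Longrightarrow> D1 x = 0 \<Longrightarrow> D2 x > 0"
  shows "\<forall>x\<in>{a..c}. D x \<le> 0"
proof (rule ccontr)
  assume "\<not> (\<forall>x\<in>{a..c}. D x \<le> 0)"
  then obtain x1 where x1: "x1 \<in> {a..c}" "D x1 > 0" by force
  obtain x0 where x0: "x0 \<in> {a..c}" "\<And>y. y \<in> {a..c} \<Longrightarrow> D y \<le> D x0"
    using continuous_attains_sup[OF compact_Icc _ cont] ac by fastforce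
  have pos: "D x0 > 0" using x0(2)[OF x1(1)] x1(2) by simp
  have "x0 \<noteq> a" "x0 \<noteq> c" using pos Da Dc by auto
  then have x0i: "x0 \<in> {a<..<c}" using x0(1) by auto
  define d where "d = min (x0 - a) (c - x0)"
  have d: "d > 0" using x0i by (auto simp: d_def)
  have "D1 x0 = 0"
  proof (rule DERIV_local_max[OF d1[OF x0i] d], intro allI impI)
    fix y assume "\<bar>x0 - y\<bar> < d"
    then have "y \<in> {a..c}" unfolding d_def by auto
    then show "D y \<le> D x0" by (rule x0(2))
  qed
  then have D2p: "D2 x0 > 0" using key[OF x0i pos] by simp
  obtain e where e: "e > 0" "\<And>h. h > 0 \<Longrightarrow> h < e \<Longrightarrow> D1 x0 < D1 (x0 + h)"
    using DERIV_pos_inc_right[OF d2[OF x0i] D2p] by blast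
  define h0 where "h0 = min e d / 2"
  have h0: "h0 > 0" "h0 < e" "h0 < d" using e d by (auto simp: h0_def)
  have dd: "DERIV D x :> D1 x" if "x0 \<le> x" "x \<le> x0 + h0" for x
  proof -
    have "x \<in> {a<..<c}" using that x0i h0 unfolding d_def by auto
    then show ?thesis by (rule d1)
  qed
  obtain z where z: "x0 < z" "z < x0 + h0" "D (x0 + h0) - D x0 = (x0 + h0 - x0) * D1 z"
    using MVT2[of x0 "x0 + h0" D D1, OF _ dd] h0 by auto
  have "D1 z > 0" using e(2)[of "z - x0"] z h0 \<open>D1 x0 = 0\<close> by auto
  then have "h0 * D1 z > 0" using h0(1) by simp
  then have "D (x0 + h0) > D x0" using z(3) by simp
  moreover have "x0 + h0 \<in> {a..c}" using h0 x0i unfolding d_def by auto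
  ultimately show False using x0(2) by fastforce
qed

definition LC :: "(real \<Rightarrow> real) \<Rightarrow> bool" where
  "LC g \<longleftrightarrow> (\<forall>a c. \<exists>C. \<forall>x\<in>{a..c}. \<forall>y\<in>{a..c}. \<bar>g x - g y\<bar> \<le> C * \<bar>x - y\<bar>)"

lemma LC_bdd:
  assumes "LC g"
  shows "\<exists>M. \<forall>x\<in>{a..c}. \<bar>g x\<bar> \<le> M"
proof -
  obtain C where C: "\<forall>x\<in>{a..c}. \<forall>y\<in>{a..c}. \<bar>g x - g y\<bar> \<le> C * \<bar>x - y\<bar>"
    using assms unfolding LC_def by blast
  have "\<bar>g x\<bar> \<le> \<bar>g a\<bar> + \<bar>C\<bar> * (c - a)" if x: "x \<in> {a..c}" for x
  proof -
    have a: "a \<in> {a..c}" using x by auto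
    have "\<bar>g x - g a\<bar> \<le> C * \<bar>x - a\<bar>" using C x a by blast
    also have "\<dots> \<le> \<bar>C\<bar> * \<bar>x - a\<bar>" by (intro mult_right_mono) auto
    also have "\<dots> \<le> \<bar>C\<bar> * (c - a)" using x by (intro mult_left_mono) auto
    finally show ?thesis by linarith
  qed
  then show ?thesis by blast
qed

lemma LC_lip: "(\<And>x y. \<bar>g x - g y\<bar> \<le> L * \<bar>x - y\<bar>) \<Longrightarrow> LC g"
  unfolding LC_def by blast

lemma LC_const: "LC (\<lambda>x. k)"
  unfolding LC_def by (intro allI exI[of _ 0]) auto

lemma LC_add: assumes "LC f" "LC g" shows "LC (\<lambda>x. f x + g x)"
  unfolding LC_def
proof (intro allI)
  fix a c
  obtain C1 where C1: "\<forall>x\<in>{a..c}. \<forall>y\<in>{a..c}. \<bar>f x - f y\<bar> \<le> C1 * \<bar>x - y\<bar>"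
    using assms(1) unfolding LC_def by blast
  obtain C2 where C2: "\<forall>x\<in>{a..c}. \<forall>y\<in>{a..c}. \<bar>g x - g y\<bar> \<le> C2 * \<bar>x - y\<bar>"
    using assms(2) unfolding LC_def by blast
  have "\<bar>f x + g x - (f y + g y)\<bar> \<le> (C1 + C2) * \<bar>x - y\<bar>" if "x\<in>{a..c}" "y\<in>{a..c}" for x y
    using C1 C2 that by (smt (verit, best) distrib_right)
  then show "\<exists>C. \<forall>x\<in>{a..c}. \<forall>y\<in>{a..c}. \<bar>f x + g x - (f y + g y)\<bar> \<le> C * \<bar>x - y\<bar>" by blast
qed

lemma LC_mult: assumes "LC f" "LC g" shows "LC (\<lambda>x. f x * g x)"
  unfolding LC_def
proof (intro allI)
  fix a c
  obtain C1 where C1: "\<forall>x\<in>{a..c}. \<forall>y\<in>{a..c}. \<bar>f x - f y\<bar> \<le> C1 * \<bar>x - y\<bar>"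
    using assms(1) unfolding LC_def by blast
  obtain C2 where C2: "\<forall>x\<in>{a..c}. \<forall>y\<in>{a..c}. \<bar>g x - g y\<bar> \<le> C2 * \<bar>x - y\<bar>"
    using assms(2) unfolding LC_def by blast
  obtain M1 where M1: "\<forall>x\<in>{a..c}. \<bar>f x\<bar> \<le> M1" using LC_bdd[OF assms(1)] by blast
  obtain M2 where M2: "\<forall>x\<in>{a..c}. \<bar>g x\<bar> \<le> M2" using LC_bdd[OF assms(2)] by blast
  have "\<bar>f x * g x - f y * g y\<bar> \<le> (M1 * C2 + M2 * C1) * \<bar>x - y\<bar>" if x: "x\<in>{a..c}" and y: "y\<in>{a..c}" for x y
  proof -
    have "f x * g x - f y * g y = f x * (g x - g y) + g y * (f x - f y)" by (simp add: algebra_simps)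
    then have "\<bar>f x * g x - f y * g y\<bar> \<le> \<bar>f x\<bar> * \<bar>g x - g y\<bar> + \<bar>g y\<bar> * \<bar>f x - f y\<bar>"
      by (simp add: abs_mult[symmetric] abs_triangle_ineq)
    also have "\<dots> \<le> M1 * (C2 * \<bar>x - y\<bar>) + M2 * (C1 * \<bar>x - y\<bar>)"
      using x y M1 M2 C1 C2 by (intro add_mono mult_mono) auto
    finally show ?thesis by (simp add: algebra_simps)
  qed
  then show "\<exists>C. \<forall>x\<in>{a..c}. \<forall>y\<in>{a..c}. \<bar>f x * g x - f y * g y\<bar> \<le> C * \<bar>x - y\<bar>" by blast
qed

lemma LC_minus: assumes "LC f" shows "LC (\<lambda>x. - f x)"
  using LC_mult[OF LC_const[of "-1"] assms] by simp

lemma LC_diff: assumes "LC f" "LC g" shows "LC (\<lambda>x. f x - g x)"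
  using LC_add[OF assms(1) LC_minus[OF assms(2)]] by simp

lemma exp_diff_le: "\<bar>exp (u::real) - exp v\<bar> \<le> exp (max u v) * \<bar>u - v\<bar>"
proof -
  have *: "exp u - exp v \<le> exp u * (u - v)" if "v \<le> u" for u v :: real
  proof -
    have "1 + (v - u) \<le> exp (v - u)" by (rule exp_ge_add_one_self)
    then have "exp u * (1 + (v - u)) \<le> exp u * exp (v - u)" by simp
    then show ?thesis by (simp add: algebra_simps flip: exp_add)
  qed
  show ?thesis
  proof (cases "v \<le> u")
    case True then show ?thesis using *[OF True] by (simp add: max_def)
  next
    case False then show ?thesis using *[of u v] by (simp add: max_def abs_if algebra_simps)
  qed
qed

lemma LC_exp: assumes "LC g" shows "LC (\<lambda>x. exp (g x))"
  unfolding LC_def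
proof (intro allI)
  fix a c
  obtain C where C: "\<forall>x\<in>{a..c}. \<forall>y\<in>{a..c}. \<bar>g x - g y\<bar> \<le> C * \<bar>x - y\<bar>"
    using assms unfolding LC_def by blast
  obtain M where M: "\<forall>x\<in>{a..c}. \<bar>g x\<bar> \<le> M" using LC_bdd[OF assms] by blast
  have "\<bar>exp (g x) - exp (g y)\<bar> \<le> (exp M * C) * \<bar>x - y\<bar>" if x: "x\<in>{a..c}" and y: "y\<in>{a..c}" for x y
  proof -
    have "\<bar>exp (g x) - exp (g y)\<bar> \<le> exp (max (g x) (g y)) * \<bar>g x - g y\<bar>" by (rule exp_diff_le)
    also have "\<dots> \<le> exp M * (C * \<bar>x - y\<bar>)"
    proof (intro mult_mono)
      show "exp (max (g x) (g y)) \<le> exp M" using x y M by (auto simp: abs_le_iff)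
    qed (use x y C in auto)
    finally show ?thesis by simp
  qed
  then show "\<exists>C. \<forall>x\<in>{a..c}. \<forall>y\<in>{a..c}. \<bar>exp (g x) - exp (g y)\<bar> \<le> C * \<bar>x - y\<bar>" by blast
qed

lemma LC_inv: assumes "LC g" "e > 0" "\<And>x. g x \<ge> e" shows "LC (\<lambda>x. 1 / g x)"
  unfolding LC_def
proof (intro allI)
  fix a c
  obtain C where C: "\<forall>x\<in>{a..c}. \<forall>y\<in>{a..c}. \<bar>g x - g y\<bar> \<le> C * \<bar>x - y\<bar>"
    using assms unfolding LC_def by blast
  have "\<bar>1 / g x - 1 / g y\<bar> \<le> (C / (e * e)) * \<bar>x - y\<bar>" if x: "x\<in>{a..c}" and y: "y\<in>{a..c}" for x y
  proof -
    have gx: "g x \<ge> e" "g y \<ge> e" using assms by auto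
    then have pos: "g x > 0" "g y > 0" using assms(2) by linarith+
    have "1 / g x - 1 / g y = (g y - g x) / (g x * g y)" using pos by (simp add: field_simps)
    then have "\<bar>1 / g x - 1 / g y\<bar> = \<bar>g x - g y\<bar> / (g x * g y)" using pos
      by (simp add: abs_minus_commute)
    also have "\<dots> \<le> \<bar>g x - g y\<bar> / (e * e)"
      using pos gx assms(2) by (intro divide_left_mono mult_mono) auto
    also have "\<dots> \<le> (C * \<bar>x - y\<bar>) / (e * e)"
      using C x y assms(2) by (intro divide_right_mono) auto
    finally show ?thesis by simp
  qed
  then show "\<exists>C. \<forall>x\<in>{a..c}. \<forall>y\<in>{a..c}. \<bar>1 / g x - 1 / g y\<bar> \<le> C * \<bar>x - y\<bar>" by blast
qed

lemma LC_deriv: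
  assumes d: "\<And>x. (g has_real_derivative g' x) (at x)" and c: "continuous_on UNIV g'"
  shows "LC g"
  unfolding LC_def
proof (intro allI)
  fix a c
  obtain M where M: "\<forall>x\<in>{a..c}. \<bar>g' x\<bar> \<le> M"
  proof -
    have "bounded (g' ` {a..c})"
      by (intro compact_imp_bounded compact_continuous_image continuous_on_subset[OF c]) auto
    then show ?thesis using that by (auto simp: bounded_iff)
  qed
  have *: "\<bar>g x - g y\<bar> \<le> M * \<bar>x - y\<bar>" if x: "x\<in>{a..c}" and y: "y\<in>{a..c}" and xy: "y < x" for x y
  proof -
    obtain z where z: "y < z" "z < x" "g x - g y = (x - y) * g' z"
      using MVT2[OF xy, of g g'] d by blast
    have "\<bar>g x - g y\<bar> = \<bar>x - y\<bar> * \<bar>g' z\<bar>" using z by (simp add: abs_mult)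
    also have "\<dots> \<le> \<bar>x - y\<bar> * M" using M z x y by (intro mult_left_mono) auto
    finally show ?thesis by (simp add: mult.commute)
  qed
  have "\<bar>g x - g y\<bar> \<le> M * \<bar>x - y\<bar>" if x: "x\<in>{a..c}" and y: "y\<in>{a..c}" for x y
    using *[OF x y] *[OF y x] by (cases x y rule: linorder_cases) (auto simp: abs_minus_commute)
  then show "\<exists>C. \<forall>x\<in>{a..c}. \<forall>y\<in>{a..c}. \<bar>g x - g y\<bar> \<le> C * \<bar>x - y\<bar>" by blast
qed

lemma LC_holder:
  assumes "LC g" "0 < \<alpha>" "\<alpha> < 1"
  shows "\<exists>C. \<forall>x\<in>{a..c}. \<forall>y\<in>{a..c}. \<bar>g x - g y\<bar> \<le> C * \<bar>x - y\<bar> powr \<alpha>"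
proof -
  obtain C where C: "\<forall>x\<in>{a..c}. \<forall>y\<in>{a..c}. \<bar>g x - g y\<bar> \<le> C * \<bar>x - y\<bar>"
    using assms unfolding LC_def by blast
  define C0 where "C0 = max C 0"
  have "\<bar>g x - g y\<bar> \<le> (C0 * \<bar>c - a\<bar> powr (1 - \<alpha>)) * \<bar>x - y\<bar> powr \<alpha>"
    if x: "x\<in>{a..c}" and y: "y\<in>{a..c}" for x y
  proof (cases "x = y")
    case True then show ?thesis by simp
  next
    case False
    have "C * \<bar>x - y\<bar> \<le> C0 * \<bar>x - y\<bar>" unfolding C0_def
      by (intro mult_right_mono) auto
    then have 1: "\<bar>g x - g y\<bar> \<le> C0 * \<bar>x - y\<bar>" using C x y by fastforce
    have 2: "\<bar>x - y\<bar> = \<bar>x - y\<bar> powr (1 - \<alpha>) * \<bar>x - y\<bar> powr \<alpha>"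
      using False by (simp flip: powr_add)
    have 3: "\<bar>x - y\<bar> powr (1 - \<alpha>) \<le> \<bar>c - a\<bar> powr (1 - \<alpha>)"
      using x y assms by (intro powr_mono2) auto
    have C0: "C0 \<ge> 0" unfolding C0_def by simp
    have "C0 * \<bar>x - y\<bar> \<le> C0 * (\<bar>c - a\<bar> powr (1 - \<alpha>) * \<bar>x - y\<bar> powr \<alpha>)"
    proof -
      have "\<bar>c - a\<bar> powr (1 - \<alpha>) * \<bar>x - y\<bar> powr \<alpha> \<ge> \<bar>x - y\<bar> powr (1 - \<alpha>) * \<bar>x - y\<bar> powr \<alpha>"
        using 3 by (intro mult_right_mono) auto
      then show ?thesis using 2 C0 by (metis mult_left_mono)
    qed
    then show ?thesis using 1 by (simp add: mult.assoc)
  qed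
  then show ?thesis by blast
qed

lemma cont_lip:
  fixes g :: "real \<Rightarrow> real"
  assumes "\<forall>x y. \<bar>g x - g y\<bar> \<le> C * \<bar>x - y\<bar>"
  shows "continuous_on S g"
proof -
  have "\<bar>C\<bar>-lipschitz_on S g"
  proof (rule lipschitz_onI)
    fix x y assume "x \<in> S" "y \<in> S"
    have "\<bar>g x - g y\<bar> \<le> C * \<bar>x - y\<bar>" using assms by blast
    also have "\<dots> \<le> \<bar>C\<bar> * \<bar>x - y\<bar>" by (intro mult_right_mono) auto
    finally show "dist (g x) (g y) \<le> \<bar>C\<bar> * dist x y" by (simp add: dist_real_def)
  qed auto
  then show ?thesis by (rule lipschitz_on_continuous_on)
qed

lemma lin_aux: fixes E P Q S X Y :: real
  shows "E = P + Q \<Longrightarrow> S = - X - Y \<Longrightarrow> Y \<le> P \<Longrightarrow> X \<le> Q \<Longrightarrow> - E \<le> S"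
  by linarith

locale hjb =
  fixes b \<sigma> f \<phi> :: "real \<Rightarrow> real" and L sigma0 Lf r lam Cphi :: real
  assumes L_pos: "L > 0"
    and lip_bs: "\<forall>x y. \<bar>b x - b y\<bar> + \<bar>\<sigma> x - \<sigma> y\<bar> \<le> L * \<bar>x - y\<bar>"
    and s0: "sigma0 > 0" "\<forall>x. \<bar>\<sigma> x\<bar> \<ge> sigma0"
    and f_nn: "\<forall>x. f x \<ge> 0" and f0: "f 0 = 0"
    and f_lip: "\<forall>x y. \<bar>f x - f y\<bar> \<le> Lf * \<bar>x - y\<bar>"
    and rL: "r > L" and lam_pos: "lam > 0"
    and phi_lip: "\<forall>x y. \<bar>\<phi> x - \<phi> y\<bar> \<le> Cphi * \<bar>x - y\<bar>"
    and phi_nn: "\<forall>x. \<phi> x \<ge> 0"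
begin

lemma r_pos: "r > 0" using rL L_pos by linarith

lemma b_lip: "\<forall>x y. \<bar>b x - b y\<bar> \<le> L * \<bar>x - y\<bar>"
proof (intro allI)
  fix x y show "\<bar>b x - b y\<bar> \<le> L * \<bar>x - y\<bar>"
    using lip_bs[rule_format, of x y] abs_ge_zero[of "\<sigma> x - \<sigma> y"] by linarith
qed
lemma s_lip: "\<forall>x y. \<bar>\<sigma> x - \<sigma> y\<bar> \<le> L * \<bar>x - y\<bar>"
proof (intro allI)
  fix x y show "\<bar>\<sigma> x - \<sigma> y\<bar> \<le> L * \<bar>x - y\<bar>"
    using lip_bs[rule_format, of x y] abs_ge_zero[of "b x - b y"] by linarith
qed

lemma cb: "continuous_on S b" by (rule cont_lip[OF b_lip])
lemma cs: "continuous_on S \<sigma>" by (rule cont_lip[OF s_lip])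
lemma cf: "continuous_on S f" by (rule cont_lip[OF f_lip])
lemma cphi: "continuous_on S \<phi>" by (rule cont_lip[OF phi_lip])

lemma s_nz: "\<sigma> x \<noteq> 0" using s0 by (metis abs_zero not_less)
lemma s2_pos: "(\<sigma> x)\<^sup>2 > 0" using s_nz by simp
lemma s2_ge: "(\<sigma> x)\<^sup>2 \<ge> sigma0\<^sup>2"
  using s0 by (metis abs_ge_zero less_le power2_abs power_mono)

lemma b_bd: "\<bar>b x\<bar> \<le> \<bar>b 0\<bar> + L * \<bar>x\<bar>"
  using b_lip[rule_format, of x 0] by simp
lemma s_bd: "\<bar>\<sigma> x\<bar> \<le> \<bar>\<sigma> 0\<bar> + L * \<bar>x\<bar>"
  using s_lip[rule_format, of x 0] by simp
lemma f_le: "f x \<le> \<bar>Lf\<bar> * \<bar>x\<bar>"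
proof -
  have "\<bar>f x - f 0\<bar> \<le> Lf * \<bar>x - 0\<bar>" using f_lip by blast
  also have "\<dots> \<le> \<bar>Lf\<bar> * \<bar>x - 0\<bar>" by (intro mult_right_mono) auto
  finally show ?thesis using f0 by simp
qed

definition "sb x = sqrt (1 + x\<^sup>2)"
definition "Bc = (\<bar>Lf\<bar> + 1) / (r - L)"
definition "c0 = \<bar>b 0\<bar> + (\<bar>\<sigma> 0\<bar> + L)\<^sup>2 / 2"
definition "Ac = (Bc * c0 + lam + 1) / r"
definition "vb x = Ac + Bc * sb x"
definition "vb1 x = Bc * x / sb x"
definition "vb2 x = Bc / (sb x) ^ 3"
definition "H x v = r * v - f x + lam * exp ((v - \<phi> x) / lam)"

lemma sb_sq: "(sb x)\<^sup>2 = 1 + x\<^sup>2" unfolding sb_def by simp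
lemma sb_ge1: "sb x \<ge> 1" unfolding sb_def by simp
lemma sb_pos: "sb x > 0" using sb_ge1[of x] by simp
lemma sb_ge: "sb x \<ge> \<bar>x\<bar>" unfolding sb_def
  by (metis abs_ge_zero le_add_same_cancel2 real_sqrt_abs real_sqrt_le_mono zero_le_one)
lemma sb_le: "sb x \<le> 1 + \<bar>x\<bar>"
proof -
  have "(sb x)\<^sup>2 \<le> (1 + \<bar>x\<bar>)\<^sup>2" unfolding sb_sq by (simp add: power2_eq_square algebra_simps)
  then have "sqrt ((sb x)\<^sup>2) \<le> sqrt ((1 + \<bar>x\<bar>)\<^sup>2)" by (rule real_sqrt_le_mono)
  then show ?thesis using sb_pos[of x] by simp
qed

lemma Bc_pos: "Bc > 0" unfolding Bc_def using rL by simp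
lemma Bc_eq: "Bc * (r - L) = \<bar>Lf\<bar> + 1" unfolding Bc_def using rL by simp
lemma c0_nn: "c0 \<ge> 0" unfolding c0_def by simp
lemma Ac_pos: "Ac > 0"
proof -
  have "Bc * c0 \<ge> 0" using Bc_pos c0_nn by simp
  then show ?thesis unfolding Ac_def using r_pos lam_pos by (intro divide_pos_pos) linarith+
qed
lemma rAc: "r * Ac = Bc * c0 + lam + 1" unfolding Ac_def using r_pos by simp
lemma vb_pos: "vb x > 0" unfolding vb_def using Ac_pos mult_pos_pos[OF Bc_pos sb_pos[of x]] by linarith
lemma cvb: "continuous_on S vb" unfolding vb_def sb_def by (intro continuous_intros)

lemma sb_deriv: "(sb has_real_derivative x / sb x) (at x)"
proof -
  have d1: "((\<lambda>x. 1 + x\<^sup>2) has_real_derivative 2 * x) (at x)"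
    by (auto intro!: derivative_eq_intros)
  have "DERIV sqrt (1 + x\<^sup>2) :> inverse (sqrt (1 + x\<^sup>2)) / 2"
    by (rule DERIV_real_sqrt) (simp add: add_pos_nonneg)
  from DERIV_chain2[OF this d1]
  have "((\<lambda>x. sqrt (1 + x\<^sup>2)) has_real_derivative inverse (sqrt (1 + x\<^sup>2)) / 2 * (2 * x)) (at x)" .
  moreover have "inverse (sqrt (1 + x\<^sup>2)) / 2 * (2 * x) = x / sqrt (1 + x\<^sup>2)"
    by (simp add: inverse_eq_divide)
  ultimately show ?thesis unfolding sb_def by simp
qed

lemma vb_deriv: "(vb has_real_derivative vb1 x) (at x)"
  unfolding vb_def vb1_def using sb_deriv[of x]
  by (auto intro!: derivative_eq_intros)

lemma vb1_deriv: "(vb1 has_real_derivative vb2 x) (at x)"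
proof -
  have "(vb1 has_real_derivative (Bc * sb x - Bc * x * (x / sb x)) / (sb x * sb x)) (at x)"
    unfolding vb1_def using sb_deriv[of x] sb_pos[of x]
    by (auto intro!: derivative_eq_intros)
  moreover have "(Bc * sb x - Bc * x * (x / sb x)) / (sb x * sb x) = vb2 x"
  proof -
    have "(Bc * sb x - Bc * x * (x / sb x)) / (sb x * sb x) = Bc * ((sb x)\<^sup>2 - x\<^sup>2) / (sb x)^3"
      using sb_pos[of x] by (simp add: field_simps power2_eq_square power3_eq_cube)
    then show ?thesis unfolding vb2_def sb_sq by simp
  qed
  ultimately show ?thesis by simp
qed

lemma T1: "\<bar>b x * vb1 x\<bar> \<le> Bc * (\<bar>b 0\<bar> + L * sb x)"
proof -
  have "\<bar>b x * vb1 x\<bar> = Bc * (\<bar>b x\<bar> * (\<bar>x\<bar> / sb x))"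
    unfolding vb1_def using Bc_pos sb_pos[of x] by (simp add: abs_mult)
  also have "\<dots> \<le> Bc * (\<bar>b x\<bar> * 1)"
    using Bc_pos sb_pos[of x] sb_ge[of x] by (intro mult_left_mono) auto
  also have "\<dots> \<le> Bc * (\<bar>b 0\<bar> + L * sb x)"
    using Bc_pos b_bd[of x] sb_ge[of x] L_pos
    by (intro mult_left_mono) (auto intro: order_trans[OF _ add_left_mono[OF mult_left_mono]])
  finally show ?thesis .
qed

lemma T2: "0 \<le> (\<sigma> x)\<^sup>2 / 2 * vb2 x \<and> (\<sigma> x)\<^sup>2 / 2 * vb2 x \<le> Bc * (\<bar>\<sigma> 0\<bar> + L)\<^sup>2 / 2"
proof
  show "0 \<le> (\<sigma> x)\<^sup>2 / 2 * vb2 x" unfolding vb2_def using Bc_pos sb_pos[of x] by simp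
  have "\<bar>\<sigma> x\<bar> \<le> (\<bar>\<sigma> 0\<bar> + L) * sb x"
  proof -
    have "\<bar>\<sigma> 0\<bar> \<le> \<bar>\<sigma> 0\<bar> * sb x" using sb_ge1[of x] by (simp add: mult_le_cancel_left1)
    moreover have "L * \<bar>x\<bar> \<le> L * sb x" using L_pos sb_ge[of x] by simp
    ultimately show ?thesis using s_bd[of x] by (simp add: algebra_simps)
  qed
  then have "(\<sigma> x)\<^sup>2 \<le> ((\<bar>\<sigma> 0\<bar> + L) * sb x)\<^sup>2"
    by (metis abs_ge_zero power2_abs power_mono)
  then have "(\<sigma> x)\<^sup>2 / 2 * vb2 x \<le> ((\<bar>\<sigma> 0\<bar> + L) * sb x)\<^sup>2 / 2 * vb2 x"
    unfolding vb2_def using Bc_pos sb_pos[of x] by (intro mult_right_mono) auto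
  also have "\<dots> = Bc * (\<bar>\<sigma> 0\<bar> + L)\<^sup>2 / 2 * (1 / sb x)"
    unfolding vb2_def using sb_pos[of x] by (simp add: field_simps power2_eq_square power3_eq_cube)
  also have "\<dots> \<le> Bc * (\<bar>\<sigma> 0\<bar> + L)\<^sup>2 / 2 * 1"
    using sb_ge1[of x] Bc_pos by (intro mult_left_mono) auto
  finally show "(\<sigma> x)\<^sup>2 / 2 * vb2 x \<le> Bc * (\<bar>\<sigma> 0\<bar> + L)\<^sup>2 / 2" by simp
qed

lemma rv_eq: "r * vb x = Bc * c0 + lam + 1 + L * Bc * sb x + (\<bar>Lf\<bar> + 1) * sb x"
proof -
  have rB: "r * Bc = (\<bar>Lf\<bar> + 1) + L * Bc" using Bc_eq by (simp add: algebra_simps)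
  have "r * vb x = r * Ac + (r * Bc) * sb x" unfolding vb_def by (simp add: algebra_simps)
  then show ?thesis by (simp add: rAc rB algebra_simps)
qed

lemma super: "(\<sigma> x)\<^sup>2 / 2 * vb2 x + b x * vb1 x < H x (vb x)"
proof -
  have e: "lam * exp ((vb x - \<phi> x) / lam) > 0" using lam_pos by simp
  have fx: "f x \<le> \<bar>Lf\<bar> * sb x"
    using order_trans[OF f_le mult_left_mono[OF sb_ge abs_ge_zero]] .
  note rv = rv_eq[of x]
  have "H x (vb x) > Bc * c0 + L * Bc * sb x"
  proof -
    define E where "E = lam * exp ((vb x - \<phi> x) / lam)"
    define S where "S = sb x"
    define F where "F = f x"
    define R where "R = r * vb x"
    define Q where "Q = L * Bc * sb x"
    have "(\<bar>Lf\<bar> + 1) * sb x = \<bar>Lf\<bar> * sb x + sb x" by (simp add: algebra_simps)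
    then have "R = Bc * c0 + lam + 1 + Q + \<bar>Lf\<bar> * S + S" using rv unfolding R_def Q_def S_def by linarith
    moreover have "F \<le> \<bar>Lf\<bar> * S" using fx unfolding F_def S_def .
    moreover have "E > 0" "S > 0" using e sb_pos[of x] unfolding E_def S_def by auto
    ultimately have "Bc * c0 + Q < R - F + E" using lam_pos by linarith
    then show ?thesis unfolding H_def E_def R_def F_def Q_def .
  qed
  moreover have "(\<sigma> x)\<^sup>2 / 2 * vb2 x + b x * vb1 x \<le> Bc * c0 + L * Bc * sb x"
  proof -
    have 1: "b x * vb1 x \<le> Bc * (\<bar>b 0\<bar> + L * sb x)" using T1[of x] by (simp add: abs_le_iff)
    have 2: "(\<sigma> x)\<^sup>2 / 2 * vb2 x \<le> Bc * (\<bar>\<sigma> 0\<bar> + L)\<^sup>2 / 2" using T2[of x] by blast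
    have 3: "Bc * c0 + L * Bc * sb x = Bc * (\<bar>b 0\<bar> + L * sb x) + Bc * (\<bar>\<sigma> 0\<bar> + L)\<^sup>2 / 2"
      unfolding c0_def by (simp add: algebra_simps)
    show ?thesis using 1 2 3 by linarith
  qed
  ultimately show ?thesis by linarith
qed

lemma sub: "(\<sigma> x)\<^sup>2 / 2 * (- vb2 x) + b x * (- vb1 x) > H x (- vb x)"
proof -
  have e: "exp ((- vb x - \<phi> x) / lam) \<le> 1"
    using vb_pos[of x] phi_nn[rule_format, of x] lam_pos by (simp add: divide_nonpos_pos)
  then have e2: "lam * exp ((- vb x - \<phi> x) / lam) \<le> lam" using lam_pos by simp
  note rv = rv_eq[of x]
  have "H x (- vb x) < - (Bc * c0 + L * Bc * sb x)"
  proof -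
    have "H x (- vb x) \<le> - (r * vb x) + lam" unfolding H_def using e2 f_nn[rule_format, of x] by simp
    moreover have "(\<bar>Lf\<bar> + 1) * sb x > 0" using sb_pos[of x] by simp
    ultimately show ?thesis using rv by linarith
  qed
  moreover have "(\<sigma> x)\<^sup>2 / 2 * (- vb2 x) + b x * (- vb1 x) \<ge> - (Bc * c0 + L * Bc * sb x)"
  proof -
    have 1: "b x * vb1 x \<le> Bc * (\<bar>b 0\<bar> + L * sb x)" using T1[of x] by (simp add: abs_le_iff)
    have 2: "(\<sigma> x)\<^sup>2 / 2 * vb2 x \<le> Bc * (\<bar>\<sigma> 0\<bar> + L)\<^sup>2 / 2" using T2[of x] by blast
    have 3: "Bc * c0 + L * Bc * sb x = Bc * (\<bar>b 0\<bar> + L * sb x) + Bc * (\<bar>\<sigma> 0\<bar> + L)\<^sup>2 / 2"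
      unfolding c0_def by (simp add: algebra_simps)
    have 4: "(\<sigma> x)\<^sup>2 / 2 * (- vb2 x) + b x * (- vb1 x) = - ((\<sigma> x)\<^sup>2 / 2 * vb2 x) - b x * vb1 x"
      by simp
    show ?thesis by (rule lin_aux[OF 3 4 1 2])
  qed
  ultimately show ?thesis by linarith
qed

lemma H_mono: "u < v \<Longrightarrow> H x u < H x v"
  unfolding H_def using r_pos lam_pos
  by (intro add_less_le_mono diff_strict_right_mono mult_strict_left_mono mult_left_mono) (auto simp: divide_right_mono)

end

lemma cbound:
  fixes g :: "real \<Rightarrow> real"
  assumes "continuous_on {a..c} g"
  obtains M where "M \<ge> 0" "\<And>t. t \<in> {a..c} \<Longrightarrow> \<bar>g t\<bar> \<le> M"
proof -
  have "bounded (g ` {a..c})"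
    by (intro compact_imp_bounded compact_continuous_image assms) auto
  then obtain M where "\<forall>y\<in>g ` {a..c}. norm y \<le> M" by (auto simp: bounded_iff)
  then have "\<And>t. t \<in> {a..c} \<Longrightarrow> \<bar>g t\<bar> \<le> max M 0"
  proof -
    fix t assume "t \<in> {a..c}"
    then have "norm (g t) \<le> M" using \<open>\<forall>y\<in>g ` {a..c}. norm y \<le> M\<close> by blast
    then show "\<bar>g t\<bar> \<le> max M 0" by simp
  qed
  then show ?thesis using that[of "max M 0"] by simp
qed

lemma quot_deriv:
  fixes W p :: "real \<Rightarrow> real"
  assumes W: "(W has_real_derivative w') (at x)"
    and p: "(p has_real_derivative bt * p x) (at x)" and px: "p x > 0"
    and w': "w' = 2 * p x / s2 * h" and bt: "bt = 2 * bb / s2" and s2: "s2 > 0"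
  shows "((\<lambda>y. W y / p y) has_real_derivative (2 / s2) * h - bt * (W x / p x)) (at x)"
    and "s2 / 2 * ((2 / s2) * h - bt * (W x / p x)) + bb * (W x / p x) = h"
proof -
  have "((\<lambda>y. W y / p y) has_real_derivative (w' * p x - W x * (bt * p x)) / (p x * p x)) (at x)"
    by (rule DERIV_divide[OF W p]) (use px in auto)
  moreover have "(w' * p x - W x * (bt * p x)) / (p x * p x) = (2 / s2) * h - bt * (W x / p x)"
    using px s2 unfolding w' by (simp add: field_simps)
  ultimately show "((\<lambda>y. W y / p y) has_real_derivative (2 / s2) * h - bt * (W x / p x)) (at x)" by simp
  show "s2 / 2 * ((2 / s2) * h - bt * (W x / p x)) + bb * (W x / p x) = h"
    using s2 unfolding bt by (simp add: field_simps)
qed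

context hjb
begin

definition "beta x = 2 * b x / (\<sigma> x)\<^sup>2"
definition "pf a x = exp (integral {a..x} beta)"
definition "qf a x = 2 * pf a x / (\<sigma> x)\<^sup>2"
definition "clip x v = max (- vb x) (min (vb x) v)"
definition "Ht x v = H x (clip x v)"

lemma cbeta: "continuous_on S beta"
  unfolding beta_def using s_nz by (intro continuous_intros cb cs) auto

lemma pf_pos: "pf a x > 0" unfolding pf_def by simp

lemma cpf: "continuous_on {a..c} (pf a)"
  unfolding pf_def
  by (intro continuous_intros indefinite_integral_continuous_1 integrable_continuous_real cbeta)

lemma cqf: "continuous_on {a..c} (qf a)"
  unfolding qf_def using s_nz by (intro continuous_intros cpf cs) auto

lemma pf_deriv_within:
  assumes "x \<in> {a..c}"
  shows "(pf a has_real_derivative beta x * pf a x) (at x within {a..c})"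
proof -
  have "((\<lambda>u. integral {a..u} beta) has_real_derivative beta x) (at x within {a..c})"
    using integral_has_vector_derivative[OF cbeta assms]
    by (simp add: has_real_derivative_iff_has_vector_derivative)
  then show ?thesis unfolding pf_def
    by (auto intro!: derivative_eq_intros)
qed

lemma pf_deriv:
  assumes "x \<in> {a<..<c}"
  shows "(pf a has_real_derivative beta x * pf a x) (at x)"
proof -
  have "x \<in> {a..c}" using assms by auto
  from pf_deriv_within[OF this] show ?thesis
    using at_within_interior[of x "{a..c}"] assms by simp
qed

lemma clip_abs: "\<bar>clip x v\<bar> \<le> vb x"
  unfolding clip_def using vb_pos[of x] by auto
lemma clip_id: "\<bar>v\<bar> \<le> vb x \<Longrightarrow> clip x v = v"
  unfolding clip_def by auto
lemma clip_lip: "\<bar>clip x u - clip x v\<bar> \<le> \<bar>u - v\<bar>"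
  unfolding clip_def by auto
lemma clip_top: "v \<ge> vb x \<Longrightarrow> clip x v = vb x"
  unfolding clip_def using vb_pos[of x] by auto
lemma clip_bot: "v \<le> - vb x \<Longrightarrow> clip x v = - vb x"
  unfolding clip_def using vb_pos[of x] by auto

definition "hb x = r * vb x + f x + lam * exp (vb x / lam)"

lemma chb: "continuous_on S hb"
  unfolding hb_def using lam_pos by (intro continuous_intros cvb cf) auto

lemma Ht_bd: "\<bar>Ht x v\<bar> \<le> hb x"
proof -
  have c: "\<bar>clip x v\<bar> \<le> vb x" by (rule clip_abs)
  have "exp ((clip x v - \<phi> x) / lam) \<le> exp (vb x / lam)"
    using c phi_nn[rule_format, of x] lam_pos by (auto intro!: divide_right_mono)
  moreover have "exp ((clip x v - \<phi> x) / lam) > 0" by simp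
  moreover have "\<bar>r * clip x v\<bar> \<le> r * vb x" using c r_pos by (simp add: abs_mult)
  ultimately have X: "lam * exp ((clip x v - \<phi> x) / lam) \<le> lam * exp (vb x / lam)"
    "lam * exp ((clip x v - \<phi> x) / lam) > 0"
    using lam_pos by (auto intro!: mult_left_mono)
  have R: "r * clip x v \<le> r * vb x" "- (r * clip x v) \<le> r * vb x"
    using \<open>\<bar>r * clip x v\<bar> \<le> r * vb x\<close> by (auto simp: abs_le_iff)
  show ?thesis unfolding Ht_def H_def hb_def abs_le_iff
    using f_nn[rule_format, of x] X R by linarith
qed

lemma Ht_lip: "\<bar>Ht x u - Ht x v\<bar> \<le> (r + exp (vb x / lam)) * \<bar>u - v\<bar>"
proof -
  define cu where "cu = clip x u"
  define cv where "cv = clip x v"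
  have cuv: "\<bar>cu - cv\<bar> \<le> \<bar>u - v\<bar>" unfolding cu_def cv_def by (rule clip_lip)
  have "max ((cu - \<phi> x) / lam) ((cv - \<phi> x) / lam) \<le> vb x / lam"
    using clip_abs[of x u] clip_abs[of x v] phi_nn[rule_format, of x] lam_pos
    unfolding cu_def cv_def by (auto intro!: divide_right_mono)
  then have ee: "exp (max ((cu - \<phi> x) / lam) ((cv - \<phi> x) / lam)) \<le> exp (vb x / lam)" by simp
  have "\<bar>exp ((cu - \<phi> x) / lam) - exp ((cv - \<phi> x) / lam)\<bar>
      \<le> exp (max ((cu - \<phi> x) / lam) ((cv - \<phi> x) / lam)) * \<bar>(cu - \<phi> x) / lam - (cv - \<phi> x) / lam\<bar>"
    by (rule exp_diff_le)
  also have "\<bar>(cu - \<phi> x) / lam - (cv - \<phi> x) / lam\<bar> = \<bar>cu - cv\<bar> / lam"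
    using lam_pos by (simp add: diff_divide_distrib[symmetric])
  finally have "\<bar>exp ((cu - \<phi> x) / lam) - exp ((cv - \<phi> x) / lam)\<bar> \<le> exp (vb x / lam) * (\<bar>cu - cv\<bar> / lam)"
    using ee by (meson abs_ge_zero divide_nonneg_nonneg lam_pos less_imp_le mult_right_mono order_trans)
  then have E: "lam * \<bar>exp ((cu - \<phi> x) / lam) - exp ((cv - \<phi> x) / lam)\<bar> \<le> exp (vb x / lam) * \<bar>cu - cv\<bar>"
    using lam_pos by (simp add: field_simps)
  have "Ht x u - Ht x v = r * (cu - cv) + lam * (exp ((cu - \<phi> x) / lam) - exp ((cv - \<phi> x) / lam))"
    unfolding Ht_def H_def cu_def cv_def by (simp add: algebra_simps)
  then have "\<bar>Ht x u - Ht x v\<bar> \<le> r * \<bar>cu - cv\<bar> + lam * \<bar>exp ((cu - \<phi> x) / lam) - exp ((cv - \<phi> x) / lam)\<bar>"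
    using r_pos lam_pos by (simp add: abs_mult abs_triangle_ineq order_trans[OF abs_triangle_ineq])
  also have "\<dots> \<le> r * \<bar>cu - cv\<bar> + exp (vb x / lam) * \<bar>cu - cv\<bar>" using E by simp
  also have "\<dots> = (r + exp (vb x / lam)) * \<bar>cu - cv\<bar>" by (simp add: algebra_simps)
  also have "\<dots> \<le> (r + exp (vb x / lam)) * \<bar>u - v\<bar>"
    using cuv r_pos by (intro mult_left_mono) auto
  finally show ?thesis .
qed

lemma cHt: "continuous_on S V \<Longrightarrow> continuous_on S (\<lambda>t. Ht t (V t))"
  unfolding Ht_def H_def clip_def
  by (intro continuous_intros cvb cf cphi) (use lam_pos in auto)

lemma cH: "continuous_on S V \<Longrightarrow> continuous_on S (\<lambda>t. H t (V t))"
  unfolding H_def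
  by (intro continuous_intros cvb cf cphi) (use lam_pos in auto)

end

lemma int_deriv_at:
  fixes g G :: "real \<Rightarrow> real"
  assumes g: "continuous_on {a..c} g" and x: "x \<in> {a<..<c}"
    and G: "\<And>y. y \<in> {a..c} \<Longrightarrow> G y = k + integral {a..y} g"
  shows "(G has_real_derivative g x) (at x)"
proof -
  have xi: "x \<in> {a..c}" using x by auto
  have "((\<lambda>u. integral {a..u} g) has_vector_derivative g x) (at x within {a..c})"
    by (rule integral_has_vector_derivative[OF g xi])
  then have "((\<lambda>u. integral {a..u} g) has_real_derivative g x) (at x)"
    using at_within_interior[of x "{a..c}"] x
    by (simp add: has_real_derivative_iff_has_vector_derivative)
  then have "((\<lambda>u. k + integral {a..u} g) has_real_derivative g x) (at x)"
    by (auto intro!: derivative_eq_intros)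
  then show ?thesis
    by (rule has_field_derivative_transform_within_open[of _ _ _ "{a<..<c}"]) (use x G in auto)
qed

lemma fst_diff_le: fixes u v :: "real \<times> real" shows "\<bar>fst u - fst v\<bar> \<le> norm (u - v)"
proof -
  have yz: "u - v = (fst u - fst v, snd u - snd v)" by (simp add: prod_eq_iff)
  show ?thesis using norm_fst_le[of "fst u - fst v" "snd u - snd v"] by (subst yz) simp
qed

context hjb
begin

lemma dirichlet:
  assumes ac: "a < c"
  shows "\<exists>V V1 V2. continuous_on {a..c} V \<and> V a = vb a \<and> V c = vb c \<and>
     (\<forall>x\<in>{a<..<c}. (V has_real_derivative V1 x) (at x) \<and> (V1 has_real_derivative V2 x) (at x) \<and>
        (\<sigma> x)\<^sup>2 / 2 * V2 x + b x * V1 x = Ht x (V x))"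
proof -
  have pnz: "\<forall>t\<in>S. pf a t \<noteq> 0" for S using pf_pos by (metis less_irrefl)
  obtain Kp where Kp: "Kp \<ge> 0" "\<And>t. t \<in> {a..c} \<Longrightarrow> \<bar>1 / pf a t\<bar> \<le> Kp"
  proof -
    have "continuous_on {a..c} (\<lambda>t. 1 / pf a t)" by (intro continuous_intros cpf) (use pnz in auto)
    then show ?thesis using cbound[of a c "\<lambda>t. 1 / pf a t"] that by metis
  qed
  obtain Mq where Mq: "Mq \<ge> 0" "\<And>t. t \<in> {a..c} \<Longrightarrow> \<bar>qf a t\<bar> \<le> Mq"
    using cbound[of a c "qf a"] cqf by metis
  obtain ME where ME: "ME \<ge> 0" "\<And>t. t \<in> {a..c} \<Longrightarrow> \<bar>exp (vb t / lam)\<bar> \<le> ME"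
  proof -
    have "continuous_on {a..c} (\<lambda>t. exp (vb t / lam))" using lam_pos by (intro continuous_intros cvb) auto
    then show ?thesis using cbound[of a c "\<lambda>t. exp (vb t / lam)"] that by metis
  qed
  obtain Mh where Mh: "Mh \<ge> 0" "\<And>t. t \<in> {a..c} \<Longrightarrow> \<bar>hb t\<bar> \<le> Mh"
    using cbound[of a c hb] chb by metis
  obtain MI where MI: "MI \<ge> 0" "\<And>t. t \<in> {a..c} \<Longrightarrow> \<bar>integral {a..t} beta\<bar> \<le> MI"
    using cbound[of a c "\<lambda>t. integral {a..t} beta"]
      indefinite_integral_continuous_1[OF integrable_continuous_real[OF cbeta]] by metis
  define K where "K = Kp + Mq * (r + ME) + 1"
  have Kpos: "K > 0" unfolding K_def using Kp Mq ME r_pos by (simp add: add_nonneg_pos)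
  define F where "F t y = (snd y / pf a t, qf a t * Ht t (fst y))" for t and y :: "real \<times> real"
  have contF: "continuous_on {a..c} (\<lambda>t. F t (Y t))" if "continuous_on {a..c} Y" for Y
  proof -
    have "continuous_on {a..c} (\<lambda>t. Ht t (fst (Y t)))"
      by (rule cHt) (intro continuous_intros that)
    then show ?thesis unfolding F_def
      by (intro continuous_intros cpf cqf that) (use pnz in auto)
  qed
  have lip: "norm (F t y - F t z) \<le> K * norm (y - z)" if t: "t \<in> {a..c}" for t y z
  proof -
    have yz: "y - z = (fst y - fst z, snd y - snd z)" by (simp add: prod_eq_iff)
    have nf: "\<bar>fst y - fst z\<bar> \<le> norm (y - z)"
      using norm_fst_le[of "fst y - fst z" "snd y - snd z"] by (subst yz) simp
    have ns: "\<bar>snd y - snd z\<bar> \<le> norm (y - z)"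
      using norm_snd_le[of "snd y - snd z" "fst y - fst z"] by (subst yz) simp
    have "F t y - F t z = ((snd y - snd z) / pf a t, qf a t * (Ht t (fst y) - Ht t (fst z)))"
      unfolding F_def by (simp add: diff_divide_distrib right_diff_distrib)
    then have "norm (F t y - F t z) \<le> \<bar>(snd y - snd z) / pf a t\<bar> + \<bar>qf a t * (Ht t (fst y) - Ht t (fst z))\<bar>"
      using norm_Pair_le by (metis real_norm_def)
    also have "\<bar>(snd y - snd z) / pf a t\<bar> = \<bar>1 / pf a t\<bar> * \<bar>snd y - snd z\<bar>"
      by (simp add: abs_mult divide_inverse mult.commute)
    also have "\<dots> \<le> Kp * norm (y - z)" using Kp t ns by (intro mult_mono) auto
    also have "\<bar>qf a t * (Ht t (fst y) - Ht t (fst z))\<bar> = \<bar>qf a t\<bar> * \<bar>Ht t (fst y) - Ht t (fst z)\<bar>"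
      by (simp add: abs_mult)
    also have "\<dots> \<le> Mq * ((r + ME) * norm (y - z))"
    proof (intro mult_mono)
      have "\<bar>Ht t (fst y) - Ht t (fst z)\<bar> \<le> (r + exp (vb t / lam)) * \<bar>fst y - fst z\<bar>" by (rule Ht_lip)
      also have "\<dots> \<le> (r + ME) * norm (y - z)"
        using ME(2)[OF t] ME(1) nf r_pos by (intro mult_mono) auto
      finally show "\<bar>Ht t (fst y) - Ht t (fst z)\<bar> \<le> (r + ME) * norm (y - z)" .
    qed (use Mq t in auto)
    finally have "norm (F t y - F t z) \<le> (Kp + Mq * (r + ME)) * norm (y - z)"
      by (simp add: algebra_simps)
    also have "\<dots> \<le> K * norm (y - z)" unfolding K_def by (intro mult_right_mono) auto
    finally show ?thesis .
  qed
  obtain Sol where Sc: "\<And>y0. continuous_on {a..c} (Sol y0)"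
    and Se: "\<And>y0 x. x \<in> {a..c} \<Longrightarrow> Sol y0 x = y0 + integral {a..x} (\<lambda>t. F t (Sol y0 t))"
    and Sd: "\<And>y0 y1 x. x \<in> {a..c} \<Longrightarrow> norm (Sol y0 x - Sol y1 x) \<le> 2 * exp (2*K*(c-a)) * norm (y0 - y1)"
    using ivp[OF less_imp_le[OF ac] Kpos contF lip] by blast
  define V where "V s t = fst (Sol (vb a, s) t)" for s t
  define W where "W s t = snd (Sol (vb a, s) t)" for s t
  have intFS: "(\<lambda>t. F t (Sol y0 t)) integrable_on {a..x}" if "x \<in> {a..c}" for y0 x
    using that by (intro integrable_continuous_real continuous_on_subset[OF contF[OF Sc]]) auto
  have cV: "continuous_on {a..c} (V s)" for s unfolding V_def by (intro continuous_intros Sc)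
  have cW: "continuous_on {a..c} (W s)" for s unfolding W_def by (intro continuous_intros Sc)
  have Veq: "V s x = vb a + integral {a..x} (\<lambda>t. W s t / pf a t)" if x: "x \<in> {a..c}" for s x
  proof -
    have "V s x = fst ((vb a, s) + integral {a..x} (\<lambda>t. F t (Sol (vb a, s) t)))"
      unfolding V_def using Se[OF x] by metis
    also have "\<dots> = vb a + integral {a..x} (fst \<circ> (\<lambda>t. F t (Sol (vb a, s) t)))"
      using integral_linear[OF intFS[OF x] bounded_linear_fst] by simp
    also have "(fst \<circ> (\<lambda>t. F t (Sol (vb a, s) t))) = (\<lambda>t. W s t / pf a t)"
      unfolding F_def W_def by auto
    finally show ?thesis .
  qed
  have Weq: "W s x = s + integral {a..x} (\<lambda>t. qf a t * Ht t (V s t))" if x: "x \<in> {a..c}" for s x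
  proof -
    have "W s x = snd ((vb a, s) + integral {a..x} (\<lambda>t. F t (Sol (vb a, s) t)))"
      unfolding W_def using Se[OF x] by metis
    also have "\<dots> = s + integral {a..x} (snd \<circ> (\<lambda>t. F t (Sol (vb a, s) t)))"
      using integral_linear[OF intFS[OF x] bounded_linear_snd] by simp
    also have "(snd \<circ> (\<lambda>t. F t (Sol (vb a, s) t))) = (\<lambda>t. qf a t * Ht t (V s t))"
      unfolding F_def V_def by auto
    finally show ?thesis .
  qed
  define g where "g s = V s c" for s
  have cg: "continuous_on S g" for S
  proof (rule cont_lip[of _ "2 * exp (2*K*(c-a))"], intro allI)
    fix s s' :: real
    have cc: "c \<in> {a..c}" using ac by auto
    have "\<bar>g s - g s'\<bar> \<le> norm (Sol (vb a, s) c - Sol (vb a, s') c)"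
      unfolding g_def V_def
      by (rule fst_diff_le)
    also have "\<dots> \<le> 2 * exp (2*K*(c-a)) * norm ((vb a, s) - (vb a, s'))" by (rule Sd[OF cc])
    also have "norm ((vb a, s) - (vb a, s')) = \<bar>s - s'\<bar>" by (simp add: norm_Pair)
    finally show "\<bar>g s - g s'\<bar> \<le> 2 * exp (2*K*(c-a)) * \<bar>s - s'\<bar>" .
  qed
  define Mg where "Mg = Mq * Mh"
  have Mg: "Mg \<ge> 0" unfolding Mg_def using Mq Mh by simp
  have Wb: "\<bar>W s t - s\<bar> \<le> Mg * (c - a)" if t: "t \<in> {a..c}" for s t
  proof -
    have cI: "continuous_on {a..c} (\<lambda>t. qf a t * Ht t (V s t))"
      by (intro continuous_intros cqf cHt cV)
    have "\<bar>W s t - s\<bar> = norm (integral {a..t} (\<lambda>t. qf a t * Ht t (V s t)))"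
      using Weq[OF t] by simp
    also have "\<dots> \<le> integral {a..t} (\<lambda>_. Mg)"
    proof (rule integral_norm_bound_integral)
      show "(\<lambda>t. qf a t * Ht t (V s t)) integrable_on {a..t}"
        using t by (intro integrable_continuous_real continuous_on_subset[OF cI]) auto
      show "(\<lambda>_. Mg) integrable_on {a..t}" by auto
      fix u assume u: "u \<in> {a..t}"
      then have u': "u \<in> {a..c}" using t by auto
      have "\<bar>Ht u (V s u)\<bar> \<le> Mh" using Ht_bd[of u "V s u"] Mh(2)[OF u'] by linarith
      then show "norm (qf a u * Ht u (V s u)) \<le> Mg"
        unfolding Mg_def using Mq(2)[OF u'] by (simp add: abs_mult mult_mono)
    qed
    also have "\<dots> = (t - a) * Mg" using t by simp
    also have "\<dots> \<le> (c - a) * Mg" using t Mg by (intro mult_right_mono) auto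
    finally show ?thesis by (simp add: mult.commute)
  qed
  define km where "km = exp (- MI)"
  have km: "km > 0" unfolding km_def by simp
  have kmle: "km \<le> 1 / pf a t" if t: "t \<in> {a..c}" for t
  proof -
    have "- MI \<le> - integral {a..t} beta" using MI(2)[OF t] by linarith
    then have "exp (- MI) \<le> exp (- integral {a..t} beta)" by simp
    then show ?thesis unfolding km_def pf_def by (simp add: exp_minus inverse_eq_divide)
  qed
  have cWp: "continuous_on {a..c} (\<lambda>t. W s t / pf a t)" for s
    by (intro continuous_intros cW cpf) (use pnz in auto)
  have intWp: "(\<lambda>t. W s t / pf a t) integrable_on {a..c}" for s
    by (rule integrable_continuous_real[OF cWp])
  define D where "D = \<bar>vb c\<bar> + \<bar>vb a\<bar>"
  define m1 where "m1 = D / (km * (c - a)) + 1"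
  have m1: "m1 > 0" unfolding m1_def D_def using km ac by (simp add: add_nonneg_pos)
  have m1D: "(c - a) * (m1 * km) \<ge> D"
  proof -
    have "(c - a) * (m1 * km) = D + km * (c - a)" unfolding m1_def using km ac by (simp add: field_simps)
    then show ?thesis using km ac by simp
  qed
  define s1 where "s1 = Mg * (c - a) + m1"
  have s1pos: "s1 > 0" unfolding s1_def using Mg ac m1 by (simp add: add_nonneg_pos)
  have g1: "g s1 \<ge> vb c"
  proof -
    have "m1 * km \<le> W s1 t / pf a t" if t: "t \<in> {a..c}" for t
    proof -
      have Wt: "W s1 t \<ge> m1" using Wb[OF t, of s1] unfolding s1_def by (simp add: abs_le_iff)
      have "m1 * km \<le> W s1 t * (1 / pf a t)" using Wt kmle[OF t] m1 km by (intro mult_mono) auto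
      then show ?thesis by simp
    qed
    then have "integral {a..c} (\<lambda>_. m1 * km) \<le> integral {a..c} (\<lambda>t. W s1 t / pf a t)"
      by (intro integral_le intWp) auto
    then have "(c - a) * (m1 * km) \<le> integral {a..c} (\<lambda>t. W s1 t / pf a t)" using ac by (simp add: mult_ac)
    then have "integral {a..c} (\<lambda>t. W s1 t / pf a t) \<ge> D" using m1D by linarith
    moreover have "g s1 = vb a + integral {a..c} (\<lambda>t. W s1 t / pf a t)"
      unfolding g_def using Veq[of c s1] ac by simp
    ultimately show ?thesis unfolding D_def by linarith
  qed
  have g0: "g (- s1) \<le> vb c"
  proof -
    have "W (- s1) t / pf a t \<le> - (m1 * km)" if t: "t \<in> {a..c}" for t
    proof -
      have Wt: "W (- s1) t \<le> - m1" using Wb[OF t, of "- s1"] unfolding s1_def by (simp add: abs_le_iff)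
      have p: "1 / pf a t > 0" using pf_pos[of a t] by simp
      have "W (- s1) t * (1 / pf a t) \<le> (- m1) * (1 / pf a t)" using Wt p by (intro mult_right_mono) auto
      also have "\<dots> \<le> (- m1) * km" using kmle[OF t] m1 by (intro mult_left_mono_neg) auto
      finally show ?thesis by simp
    qed
    then have "integral {a..c} (\<lambda>t. W (- s1) t / pf a t) \<le> integral {a..c} (\<lambda>_. - (m1 * km))"
      by (intro integral_le intWp) auto
    then have "integral {a..c} (\<lambda>t. W (- s1) t / pf a t) \<le> - ((c - a) * (m1 * km))" using ac by (simp add: mult_ac)
    then have "integral {a..c} (\<lambda>t. W (- s1) t / pf a t) \<le> - D" using m1D by linarith
    moreover have "g (- s1) = vb a + integral {a..c} (\<lambda>t. W (- s1) t / pf a t)"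
      unfolding g_def using Veq[of c "- s1"] ac by simp
    ultimately show ?thesis unfolding D_def by linarith
  qed
  obtain s where s: "g s = vb c"
    using IVT'[of g "- s1" "vb c" s1, OF g0 g1 _ cg] s1pos by auto
  define V1 where "V1 t = W s t / pf a t" for t
  define V2 where "V2 t = 2 / (\<sigma> t)\<^sup>2 * Ht t (V s t) - beta t * V1 t" for t
  show ?thesis
  proof (intro exI conjI ballI)
    show "continuous_on {a..c} (V s)" by (rule cV)
    show "V s a = vb a" using Veq[of a s] ac by simp
    show "V s c = vb c" using s unfolding g_def .
    fix x assume x: "x \<in> {a<..<c}"
    show "(V s has_real_derivative V1 x) (at x)"
      unfolding V1_def by (rule int_deriv_at[OF cWp x Veq])
    have Wd: "(W s has_real_derivative qf a x * Ht x (V s x)) (at x)"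
      by (rule int_deriv_at[OF _ x Weq]) (intro continuous_intros cqf cHt cV)
    note qd = quot_deriv[OF Wd pf_deriv[OF x] pf_pos _ beta_def s2_pos, where h = "Ht x (V s x)"]
    show "(V1 has_real_derivative V2 x) (at x)"
      unfolding V1_def V2_def using qd(1) unfolding qf_def by simp
    show "(\<sigma> x)\<^sup>2 / 2 * V2 x + b x * V1 x = Ht x (V s x)"
      unfolding V1_def V2_def using qd(2) unfolding qf_def by simp
  qed
qed

end

context hjb
begin

definition "DSol a c V V1 V2 \<longleftrightarrow> continuous_on {a..c} V \<and> V a = vb a \<and> V c = vb c \<and>
   (\<forall>x\<in>{a..c}. \<bar>V x\<bar> \<le> vb x) \<and>
   (\<forall>x\<in>{a<..<c}. (V has_real_derivative V1 x) (at x) \<and> (V1 has_real_derivative V2 x) (at x) \<and>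
        (\<sigma> x)\<^sup>2 / 2 * V2 x + b x * V1 x = H x (V x))"

lemma DSol_ex:
  assumes ac: "a < c"
  shows "\<exists>V V1 V2. DSol a c V V1 V2"
proof -
  obtain V V1 V2 where cV: "continuous_on {a..c} V" and Va: "V a = vb a" and Vc: "V c = vb c"
    and dV: "\<And>x. x \<in> {a<..<c} \<Longrightarrow> (V has_real_derivative V1 x) (at x)"
    and dV1: "\<And>x. x \<in> {a<..<c} \<Longrightarrow> (V1 has_real_derivative V2 x) (at x)"
    and eq: "\<And>x. x \<in> {a<..<c} \<Longrightarrow> (\<sigma> x)\<^sup>2 / 2 * V2 x + b x * V1 x = Ht x (V x)"
    using dirichlet[OF ac] by blast
  have up: "\<forall>x\<in>{a..c}. V x - vb x \<le> 0"
  proof (rule maxp[of a c _ "\<lambda>x. V1 x - vb1 x" "\<lambda>x. V2 x - vb2 x"])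
    show "a \<le> c" using ac by simp
    show "continuous_on {a..c} (\<lambda>x. V x - vb x)" by (intro continuous_intros cV cvb)
    show "((\<lambda>x. V x - vb x) has_real_derivative V1 x - vb1 x) (at x)" if "x \<in> {a<..<c}" for x
      using dV[OF that] vb_deriv[of x] by (intro derivative_intros)
    show "((\<lambda>x. V1 x - vb1 x) has_real_derivative V2 x - vb2 x) (at x)" if "x \<in> {a<..<c}" for x
      using dV1[OF that] vb1_deriv[of x] by (intro derivative_intros)
    show "V a - vb a \<le> 0" "V c - vb c \<le> 0" using Va Vc by auto
    fix x assume x: "x \<in> {a<..<c}" and D: "V x - vb x > 0" and D1: "V1 x - vb1 x = 0"
    have "Ht x (V x) = H x (vb x)" unfolding Ht_def using clip_top[where x=x and v="V x"] D by simp
    then have "(\<sigma> x)\<^sup>2 / 2 * V2 x + b x * V1 x > (\<sigma> x)\<^sup>2 / 2 * vb2 x + b x * vb1 x"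
      using eq[OF x] super[of x] by simp
    then have "(\<sigma> x)\<^sup>2 / 2 * (V2 x - vb2 x) > 0" using D1 by (simp add: algebra_simps)
    then show "V2 x - vb2 x > 0" using s2_pos[of x] by (simp add: zero_less_mult_iff)
  qed
  have lo: "\<forall>x\<in>{a..c}. - vb x - V x \<le> 0"
  proof (rule maxp[of a c _ "\<lambda>x. - vb1 x - V1 x" "\<lambda>x. - vb2 x - V2 x"])
    show "a \<le> c" using ac by simp
    show "continuous_on {a..c} (\<lambda>x. - vb x - V x)" by (intro continuous_intros cV cvb)
    show "((\<lambda>x. - vb x - V x) has_real_derivative - vb1 x - V1 x) (at x)" if "x \<in> {a<..<c}" for x
      using dV[OF that] vb_deriv[of x] by (intro derivative_intros)
    show "((\<lambda>x. - vb1 x - V1 x) has_real_derivative - vb2 x - V2 x) (at x)" if "x \<in> {a<..<c}" for x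
      using dV1[OF that] vb1_deriv[of x] by (intro derivative_intros)
    show "- vb a - V a \<le> 0" "- vb c - V c \<le> 0" using Va Vc vb_pos[of a] vb_pos[of c] by auto
    fix x assume x: "x \<in> {a<..<c}" and D: "- vb x - V x > 0" and D1: "- vb1 x - V1 x = 0"
    have "Ht x (V x) = H x (- vb x)" unfolding Ht_def using clip_bot[where x=x and v="V x"] D by simp
    then have "(\<sigma> x)\<^sup>2 / 2 * V2 x + b x * V1 x < (\<sigma> x)\<^sup>2 / 2 * (- vb2 x) + b x * (- vb1 x)"
      using eq[OF x] sub[of x] by simp
    moreover have "V1 x = - vb1 x" using D1 by simp
    ultimately have "(\<sigma> x)\<^sup>2 / 2 * V2 x < (\<sigma> x)\<^sup>2 / 2 * (- vb2 x)" by simp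
    then have "(\<sigma> x)\<^sup>2 / 2 * V2 x < (\<sigma> x)\<^sup>2 / 2 * (- vb2 x)" .
    then have "V2 x < - vb2 x" using mult_less_cancel_left_pos[of "(\<sigma> x)\<^sup>2 / 2" "V2 x" "- vb2 x"] s2_pos[of x] by simp
    then show "- vb2 x - V2 x > 0" by simp
  qed
  have bd: "\<forall>x\<in>{a..c}. \<bar>V x\<bar> \<le> vb x" using up lo by (auto simp: abs_le_iff)
  have "\<forall>x\<in>{a<..<c}. Ht x (V x) = H x (V x)"
    using bd clip_id unfolding Ht_def by auto
  then have "DSol a c V V1 V2"
    unfolding DSol_def using cV Va Vc bd dV dV1 eq by auto
  then show ?thesis by blast
qed

lemma DSol_cmp:
  assumes U: "DSol a' c' U U1 U2" and V: "DSol a c V V1 V2"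
    and le: "a' \<le> a" "a < c" "c \<le> c'"
  shows "\<forall>x\<in>{a..c}. U x \<le> V x"
proof -
  have sub: "{a<..<c} \<subseteq> {a'<..<c'}" "{a..c} \<subseteq> {a'..c'}" using le by auto
  note Ud = U[unfolded DSol_def] and Vd = V[unfolded DSol_def]
  have "\<forall>x\<in>{a..c}. U x - V x \<le> 0"
  proof (rule maxp[of a c _ "\<lambda>x. U1 x - V1 x" "\<lambda>x. U2 x - V2 x"])
    show "a \<le> c" using le by simp
    show "continuous_on {a..c} (\<lambda>x. U x - V x)"
      using Ud Vd sub by (intro continuous_intros) (auto intro: continuous_on_subset)
    show "((\<lambda>x. U x - V x) has_real_derivative U1 x - V1 x) (at x)" if "x \<in> {a<..<c}" for x
      using Ud Vd sub that by (intro derivative_intros) auto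
    show "((\<lambda>x. U1 x - V1 x) has_real_derivative U2 x - V2 x) (at x)" if "x \<in> {a<..<c}" for x
      using Ud Vd sub that by (intro derivative_intros) auto
    have "a \<in> {a'..c'}" "c \<in> {a'..c'}" using le by auto
    then show "U a - V a \<le> 0" "U c - V c \<le> 0" using Ud Vd by (auto simp: abs_le_iff)
    fix x assume x: "x \<in> {a<..<c}" and D: "U x - V x > 0" and D1: "U1 x - V1 x = 0"
    have eU: "(\<sigma> x)\<^sup>2 / 2 * U2 x + b x * U1 x = H x (U x)" using Ud sub x by auto
    have eV: "(\<sigma> x)\<^sup>2 / 2 * V2 x + b x * V1 x = H x (V x)" using Vd x by auto
    have "H x (U x) > H x (V x)" using H_mono D by simp
    then have "(\<sigma> x)\<^sup>2 / 2 * (U2 x - V2 x) > 0" using eU eV D1 by (simp add: algebra_simps)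
    then show "U2 x - V2 x > 0" using s2_pos[of x] by (simp add: zero_less_mult_iff)
  qed
  then show ?thesis by auto
qed

end

lemma ftc_real:
  fixes F f :: "real \<Rightarrow> real"
  assumes "a \<le> x" "\<And>t. t \<in> {a..x} \<Longrightarrow> (F has_real_derivative f t) (at t within {a..x})"
  shows "F x = F a + integral {a..x} f"
proof -
  have "(f has_integral (F x - F a)) {a..x}"
    using assms by (intro fundamental_theorem_of_calculus) (auto simp: has_real_derivative_iff_has_vector_derivative)
  then show ?thesis by (simp add: integral_unique)
qed

context hjb
begin

lemma km_ex: "\<exists>km>0. \<forall>t\<in>{a..c}. km \<le> 1 / pf a t"
proof -
  obtain MI where MI: "MI \<ge> 0" "\<And>t. t \<in> {a..c} \<Longrightarrow> \<bar>integral {a..t} beta\<bar> \<le> MI"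
    using cbound[of a c "\<lambda>t. integral {a..t} beta"]
      indefinite_integral_continuous_1[OF integrable_continuous_real[OF cbeta]] by metis
  have "exp (- MI) \<le> 1 / pf a t" if t: "t \<in> {a..c}" for t
  proof -
    have "- MI \<le> - integral {a..t} beta" using MI(2)[OF t] by linarith
    then have "exp (- MI) \<le> exp (- integral {a..t} beta)" by simp
    then show ?thesis unfolding pf_def by (simp add: exp_minus inverse_eq_divide)
  qed
  then show ?thesis by (intro exI[of _ "exp (- MI)"]) auto
qed

lemma limit_stage:
  fixes u u1 u2 :: "nat \<Rightarrow> real \<Rightarrow> real" and Vl :: "real \<Rightarrow> real"
  assumes ac: "a < c"
    and du: "\<And>k t. t \<in> {a..c} \<Longrightarrow> (u k has_real_derivative u1 k t) (at t)"
    and du1: "\<And>k t. t \<in> {a..c} \<Longrightarrow> (u1 k has_real_derivative u2 k t) (at t)"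
    and eq: "\<And>k t. t \<in> {a..c} \<Longrightarrow> (\<sigma> t)\<^sup>2 / 2 * u2 k t + b t * u1 k t = H t (u k t)"
    and bd: "\<And>k t. t \<in> {a..c} \<Longrightarrow> \<bar>u k t\<bar> \<le> vb t"
    and conv: "\<And>t. t \<in> {a..c} \<Longrightarrow> (\<lambda>k. u k t) \<longlonglongrightarrow> Vl t"
  shows "\<exists>D1 D2. \<forall>x\<in>{a<..<c}. (Vl has_real_derivative D1 x) (at x) \<and>
           (D1 has_real_derivative D2 x) (at x) \<and> (\<sigma> x)\<^sup>2 / 2 * D2 x + b x * D1 x = H x (Vl x)"
proof -
  define p where "p = pf a"
  define q where "q = qf a"
  have pnz: "\<forall>t\<in>S. p t \<noteq> 0" for S unfolding p_def using pf_pos by (metis less_irrefl)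
  have cp: "continuous_on {a..c} p" unfolding p_def by (rule cpf)
  have cq: "continuous_on {a..c} q" unfolding q_def by (rule cqf)
  have c1p: "continuous_on {a..c} (\<lambda>t. 1 / p t)" by (intro continuous_intros cp) (use pnz in auto)
  have cu: "continuous_on {a..c} (u k)" for k
    by (intro continuous_at_imp_continuous_on ballI DERIV_isCont[OF du])
  define gk where "gk k t = q t * H t (u k t)" for k t
  have cg: "continuous_on {a..c} (gk k)" for k unfolding gk_def by (intro continuous_intros cq cH cu)
  define Wk where "Wk k t = p t * u1 k t" for k t
  have dW: "(Wk k has_real_derivative gk k t) (at t within {a..c})" if t: "t \<in> {a..c}" for k t
  proof -
    have pd: "(p has_real_derivative beta t * p t) (at t within {a..c})" unfolding p_def by (rule pf_deriv_within[OF t])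
    have ud: "(u1 k has_real_derivative u2 k t) (at t within {a..c})"
      by (rule has_field_derivative_at_within[OF du1[OF t]])
    have "p t * u2 k t + beta t * p t * u1 k t = gk k t"
    proof -
      have "gk k t = q t * ((\<sigma> t)\<^sup>2 / 2 * u2 k t + b t * u1 k t)" unfolding gk_def using eq[OF t] by simp
      then show ?thesis unfolding q_def qf_def beta_def p_def using s_nz[of t] by (simp add: field_simps)
    qed
    then show ?thesis using DERIV_mult'[OF pd ud] unfolding Wk_def by simp
  qed
  have Weq: "Wk k x = Wk k a + integral {a..x} (gk k)" if x: "x \<in> {a..c}" for k x
    using x by (intro ftc_real) (auto intro: DERIV_subset[OF dW])
  have ueq: "u k x = u k a + integral {a..x} (u1 k)" if x: "x \<in> {a..c}" for k x
    using x by (intro ftc_real) (auto intro!: has_field_derivative_at_within du)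
  define G where "G k t = integral {a..t} (gk k)" for k t
  have cG: "continuous_on {a..c} (G k)" for k
    unfolding G_def by (rule indefinite_integral_continuous_1[OF integrable_continuous_real[OF cg]])
  define P where "P x = integral {a..x} (\<lambda>t. 1 / p t)" for x
  define IG where "IG k x = integral {a..x} (\<lambda>t. G k t / p t)" for k x
  have cGp: "continuous_on {a..c} (\<lambda>t. G k t / p t)" for k
    by (intro continuous_intros cG cp) (use pnz in auto)
  have I: "u k x = u k a + Wk k a * P x + IG k x" if x: "x \<in> {a..c}" for k x
  proof -
    have sub: "{a..x} \<subseteq> {a..c}" using x by auto
    have "integral {a..x} (u1 k) = integral {a..x} (\<lambda>t. Wk k a * (1 / p t) + G k t / p t)"
    proof (rule integral_cong)
      fix t assume "t \<in> {a..x}"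
      then have t: "t \<in> {a..c}" using sub by auto
      have "u1 k t = Wk k t / p t" unfolding Wk_def using pnz by auto
      also have "\<dots> = (Wk k a + G k t) / p t" using Weq[OF t] unfolding G_def by simp
      finally show "u1 k t = Wk k a * (1 / p t) + G k t / p t" by (simp add: add_divide_distrib)
    qed
    also have "\<dots> = Wk k a * P x + IG k x"
    proof -
      have i1: "(\<lambda>t. 1 / p t) integrable_on {a..x}"
        by (intro integrable_continuous_real continuous_on_subset[OF c1p sub])
      have i1': "(\<lambda>t. Wk k a * (1 / p t)) integrable_on {a..x}"
        by (intro integrable_continuous_real continuous_intros continuous_on_subset[OF c1p sub])
      have i2: "(\<lambda>t. G k t / p t) integrable_on {a..x}"
        by (intro integrable_continuous_real continuous_on_subset[OF cGp sub])
      show ?thesis unfolding P_def IG_def integral_add[OF i1' i2] integral_mult[OF i1, symmetric] ..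
    qed
    finally show ?thesis using ueq[OF x] by simp
  qed
  define dom where "dom t = \<bar>q t\<bar> * hb t" for t
  have cdom: "continuous_on {a..c} dom" unfolding dom_def by (intro continuous_intros cq chb)
  have hb_nn: "hb t \<ge> 0" for t
    unfolding hb_def using r_pos vb_pos[of t] f_nn lam_pos by (simp add: add_nonneg_nonneg)
  have dom_nn: "dom t \<ge> 0" for t unfolding dom_def using hb_nn by simp
  have gbd: "\<bar>gk k t\<bar> \<le> dom t" if t: "t \<in> {a..c}" for k t
  proof -
    have "H t (u k t) = Ht t (u k t)" unfolding Ht_def using clip_id[OF bd[OF t]] by simp
    then have "\<bar>H t (u k t)\<bar> \<le> hb t" using Ht_bd by simp
    then show ?thesis unfolding gk_def dom_def by (simp add: abs_mult mult_left_mono)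
  qed
  define Ib where "Ib = integral {a..c} dom"
  have Gbd: "\<bar>G k t\<bar> \<le> Ib" if t: "t \<in> {a..c}" for k t
  proof -
    have sub: "{a..t} \<subseteq> {a..c}" using t by auto
    have "norm (G k t) \<le> integral {a..t} dom" unfolding G_def
      by (rule integral_norm_bound_integral)
        (use sub gbd in \<open>auto intro!: integrable_continuous_real continuous_on_subset[OF cg] continuous_on_subset[OF cdom]\<close>)
    also have "\<dots> \<le> Ib" unfolding Ib_def
      by (rule integral_subset_le[OF sub]) (auto intro!: integrable_continuous_real cdom dom_nn continuous_on_subset[OF cdom sub])
    finally show ?thesis by simp
  qed
  define ginf where "ginf t = q t * H t (Vl t)" for t
  define Ginf where "Ginf t = integral {a..t} ginf" for t
  have L1: "ginf integrable_on {a..t} \<and> (\<lambda>k. G k t) \<longlonglongrightarrow> Ginf t" if t: "t \<in> {a..c}" for t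
  proof -
    have sub: "{a..t} \<subseteq> {a..c}" using t by auto
    have fi: "gk k integrable_on {a..t}" for k by (intro integrable_continuous_real continuous_on_subset[OF cg sub])
    have hi: "dom integrable_on {a..t}" by (intro integrable_continuous_real continuous_on_subset[OF cdom sub])
    have le: "norm (gk k y) \<le> dom y" if "y \<in> {a..t}" for k y using gbd sub that by auto
    have cv: "(\<lambda>k. gk k y) \<longlonglongrightarrow> ginf y" if "y \<in> {a..t}" for y
    proof -
      have "(\<lambda>k. u k y) \<longlonglongrightarrow> Vl y" using conv sub that by auto
      then show ?thesis unfolding gk_def ginf_def H_def using lam_pos by (intro tendsto_intros) auto
    qed
    show ?thesis using dominated_convergence[OF fi hi le cv] unfolding G_def Ginf_def by auto
  qed
  have cGi: "continuous_on {a..c} Ginf"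
    unfolding Ginf_def using L1[of c] ac by (intro indefinite_integral_continuous_1) auto
  have cGip: "continuous_on {a..c} (\<lambda>t. Ginf t / p t)"
    by (intro continuous_intros cGi cp) (use pnz in auto)
  define IGinf where "IGinf x = integral {a..x} (\<lambda>t. Ginf t / p t)" for x
  have L2: "(\<lambda>k. IG k x) \<longlonglongrightarrow> IGinf x" if x: "x \<in> {a..c}" for x
  proof -
    have sub: "{a..x} \<subseteq> {a..c}" using x by auto
    have fi: "(\<lambda>t. G k t / p t) integrable_on {a..x}" for k
      by (intro integrable_continuous_real continuous_on_subset[OF cGp sub])
    have hi: "(\<lambda>t. Ib * (1 / p t)) integrable_on {a..x}"
      by (intro integrable_continuous_real continuous_intros continuous_on_subset[OF c1p sub])
    have le: "norm (G k t / p t) \<le> Ib * (1 / p t)" if "t \<in> {a..x}" for k t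
    proof -
      have t: "t \<in> {a..c}" using sub that by auto
      have "norm (G k t / p t) = \<bar>G k t\<bar> * (1 / p t)" unfolding p_def using pf_pos[of a t] by simp
      also have "\<dots> \<le> Ib * (1 / p t)" using Gbd[OF t] pf_pos[of a t] unfolding p_def
        by (intro mult_right_mono) auto
      finally show ?thesis .
    qed
    have cv: "(\<lambda>k. G k t / p t) \<longlonglongrightarrow> Ginf t / p t" if "t \<in> {a..x}" for t
      using L1[of t] sub that pnz by (intro tendsto_intros) auto
    show ?thesis using dominated_convergence(2)[OF fi hi le cv] unfolding IG_def IGinf_def by auto
  qed
  obtain km where km: "km > 0" "\<And>t. t \<in> {a..c} \<Longrightarrow> km \<le> 1 / p t"
    using km_ex[of a c] unfolding p_def by auto
  have Pc: "P c > 0"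
  proof -
    have "integral {a..c} (\<lambda>_. km) \<le> P c" unfolding P_def
      by (intro integral_le integrable_continuous_real c1p) (use km in auto)
    then have "(c - a) * km \<le> P c" using ac by simp
    moreover have "(c - a) * km > 0" using ac km by simp
    ultimately show ?thesis by linarith
  qed
  have ca: "a \<in> {a..c}" "c \<in> {a..c}" using ac by auto
  have Wa: "Wk k a = (u k c - u k a - IG k c) / P c" for k
    using I[OF ca(2), of k] Pc by (simp add: field_simps)
  define ws where "ws = (Vl c - Vl a - IGinf c) / P c"
  have L3: "(\<lambda>k. Wk k a) \<longlonglongrightarrow> ws"
    unfolding Wa ws_def using conv[OF ca(1)] conv[OF ca(2)] L2[OF ca(2)] Pc by (intro tendsto_intros) auto
  have L4: "Vl x = Vl a + ws * P x + IGinf x" if x: "x \<in> {a..c}" for x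
  proof -
    have "(\<lambda>k. u k x) \<longlonglongrightarrow> Vl a + ws * P x + IGinf x"
      unfolding I[OF x] using conv[OF ca(1)] L3 L2[OF x] by (intro tendsto_intros)
    then show ?thesis using conv[OF x] LIMSEQ_unique by blast
  qed
  define D1 where "D1 y = (ws + Ginf y) / p y" for y
  have cD1: "continuous_on {a..c} D1" unfolding D1_def
    by (intro continuous_intros cGi cp) (use pnz in auto)
  have Rep: "Vl x = Vl a + integral {a..x} D1" if x: "x \<in> {a..c}" for x
  proof -
    have sub: "{a..x} \<subseteq> {a..c}" using x by auto
    have "integral {a..x} D1 = integral {a..x} (\<lambda>t. ws * (1 / p t) + Ginf t / p t)"
      unfolding D1_def by (rule integral_cong) (simp add: add_divide_distrib)
    also have "\<dots> = ws * P x + IGinf x"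
    proof -
      have i1: "(\<lambda>t. 1 / p t) integrable_on {a..x}"
        by (intro integrable_continuous_real continuous_on_subset[OF c1p sub])
      have i1': "(\<lambda>t. ws * (1 / p t)) integrable_on {a..x}"
        by (intro integrable_continuous_real continuous_intros continuous_on_subset[OF c1p sub])
      have i2: "(\<lambda>t. Ginf t / p t) integrable_on {a..x}"
        by (intro integrable_continuous_real continuous_on_subset[OF cGip sub])
      show ?thesis unfolding P_def IGinf_def integral_add[OF i1' i2] integral_mult[OF i1, symmetric] ..
    qed
    finally show ?thesis using L4[OF x] by simp
  qed
  have cVl: "continuous_on {a..c} Vl"
  proof -
    have "continuous_on {a..c} (\<lambda>x. Vl a + integral {a..x} D1)"
      by (intro continuous_intros indefinite_integral_continuous_1 integrable_continuous_real cD1)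
    then show ?thesis by (rule continuous_on_eq) (rule sym, rule Rep)
  qed
  have cgi: "continuous_on {a..c} ginf" unfolding ginf_def by (intro continuous_intros cq cH cVl)
  define D2 where "D2 y = 2 / (\<sigma> y)\<^sup>2 * H y (Vl y) - beta y * D1 y" for y
  show ?thesis
  proof (intro exI ballI conjI)
    fix x assume x: "x \<in> {a<..<c}"
    show "(Vl has_real_derivative D1 x) (at x)" by (rule int_deriv_at[OF cD1 x Rep])
    have Wd: "((\<lambda>y. ws + Ginf y) has_real_derivative ginf x) (at x)"
      by (rule int_deriv_at[OF cgi x]) (simp add: Ginf_def)
    note qd = quot_deriv[OF Wd pf_deriv[OF x] pf_pos _ beta_def s2_pos, where h = "H x (Vl x)"]
    show "(D1 has_real_derivative D2 x) (at x)"
      unfolding D1_def D2_def using qd(1) unfolding ginf_def q_def qf_def p_def by simp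
    show "(\<sigma> x)\<^sup>2 / 2 * D2 x + b x * D1 x = H x (Vl x)"
      unfolding D1_def D2_def using qd(2) unfolding ginf_def q_def qf_def p_def by simp
  qed
qed

end

context hjb
begin

lemma existence:
  "\<exists>V V' V''. (\<forall>x. (V has_real_derivative V' x) (at x)) \<and> (\<forall>x. (V' has_real_derivative V'' x) (at x)) \<and>
     (\<forall>x. (\<sigma> x)\<^sup>2 / 2 * V'' x + b x * V' x = H x (V x)) \<and> (\<forall>x. \<bar>V x\<bar> \<le> vb x)"
proof -
  define R where "R n = real n + 1" for n :: nat
  have Rpos: "R n > 0" for n unfolding R_def by simp
  have ex: "\<forall>n. \<exists>T. DSol (- R n) (R n) (fst T) (fst (snd T)) (snd (snd T))"
  proof
    fix n
    obtain V V1 V2 where "DSol (- R n) (R n) V V1 V2" using DSol_ex[of "- R n" "R n"] Rpos[of n] by auto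
    then show "\<exists>T. DSol (- R n) (R n) (fst T) (fst (snd T)) (snd (snd T))" by (intro exI[of _ "(V, V1, V2)"]) simp
  qed
  obtain T where T: "\<And>n. DSol (- R n) (R n) (fst (T n)) (fst (snd (T n))) (snd (snd (T n)))"
    using choice[OF ex] by blast
  define Us where "Us n = fst (T n)" for n
  define U1s where "U1s n = fst (snd (T n))" for n
  define U2s where "U2s n = snd (snd (T n))" for n
  have DS: "DSol (- R n) (R n) (Us n) (U1s n) (U2s n)" for n using T unfolding Us_def U1s_def U2s_def .
  note DSd = DS[unfolded DSol_def]
  have mono: "Us (Suc n) x \<le> Us n x" if "x \<in> {- R n..R n}" for n x
    using DSol_cmp[OF DS[of "Suc n"] DS[of n]] that Rpos[of n] unfolding R_def by auto
  have bnd: "\<bar>Us n x\<bar> \<le> vb x" if "x \<in> {- R n..R n}" for n x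
    using DSd[of n] that by auto
  define Nx where "Nx x = nat \<lceil>\<bar>x\<bar>\<rceil>" for x :: real
  have Nx: "\<bar>x\<bar> \<le> real (Nx x)" for x unfolding Nx_def by linarith
  have inR: "x \<in> {- R n..R n}" if "Nx x \<le> n" for x n
    using Nx[of x] that unfolding R_def by auto
  have inRo: "x \<in> {- R (Nx x)<..<R (Nx x)}" for x
    using Nx[of x] unfolding R_def by auto
  have conv: "convergent (\<lambda>n. Us n x)" for x
  proof (rule Bseq_monoseq_convergent'_dec[where M = "Nx x"])
    show "Bseq (\<lambda>n. Us (n + Nx x) x)"
      by (rule BseqI'[where K = "vb x"]) (use bnd inR in auto)
    fix m n assume mn: "Nx x \<le> m" "m \<le> n"
    show "Us n x \<le> Us m x"
      using mn(2)
    proof (induction n rule: dec_induct)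
      case base then show ?case by simp
    next
      case (step k)
      have "Us (Suc k) x \<le> Us k x" using mono[OF inR] step mn by auto
      then show ?case using step by simp
    qed
  qed
  define Vl where "Vl x = lim (\<lambda>n. Us n x)" for x
  have lim: "(\<lambda>n. Us n x) \<longlonglongrightarrow> Vl x" for x unfolding Vl_def using conv convergent_LIMSEQ_iff by blast
  have Vbd: "\<bar>Vl x\<bar> \<le> vb x" for x
  proof -
    have ev: "\<forall>n\<ge>Nx x. \<bar>Us n x\<bar> \<le> vb x" using bnd inR by auto
    have "Vl x \<le> vb x" by (rule LIMSEQ_le_const2[OF lim]) (use ev in \<open>auto simp: abs_le_iff\<close>)
    moreover have "- vb x \<le> Vl x"
    proof (rule LIMSEQ_le_const[OF lim])
      show "\<exists>N. \<forall>n\<ge>N. - vb x \<le> Us n x" using ev by (intro exI[of _ "Nx x"]) (auto simp: abs_le_iff)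
    qed
    ultimately show ?thesis by auto
  qed
  have loc: "\<exists>D1 D2. \<forall>x\<in>{- R N<..<R N}. (Vl has_real_derivative D1 x) (at x) \<and>
           (D1 has_real_derivative D2 x) (at x) \<and> (\<sigma> x)\<^sup>2 / 2 * D2 x + b x * D1 x = H x (Vl x)" for N
  proof -
    have sub: "t \<in> {- R (k + Suc N)<..<R (k + Suc N)}" "t \<in> {- R (k + Suc N)..R (k + Suc N)}"
      if "t \<in> {- R N..R N}" for t k using that unfolding R_def by auto
    have h0: "- R N < R N" using Rpos[of N] by simp
    have h1: "(Us (k + Suc N) has_real_derivative U1s (k + Suc N) t) (at t)" if t: "t \<in> {- R N..R N}" for k t
      using DSd sub[OF t] by blast
    have h2: "(U1s (k + Suc N) has_real_derivative U2s (k + Suc N) t) (at t)" if t: "t \<in> {- R N..R N}" for k t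
      using DSd sub[OF t] by blast
    have h3: "(\<sigma> t)\<^sup>2 / 2 * U2s (k + Suc N) t + b t * U1s (k + Suc N) t = H t (Us (k + Suc N) t)"
      if t: "t \<in> {- R N..R N}" for k t
      using DSd sub[OF t] by blast
    have h4: "\<bar>Us (k + Suc N) t\<bar> \<le> vb t" if t: "t \<in> {- R N..R N}" for k t
      using DSd sub[OF t] by blast
    have h5: "(\<lambda>k. Us (k + Suc N) t) \<longlonglongrightarrow> Vl t" if t: "t \<in> {- R N..R N}" for t
      by (rule LIMSEQ_ignore_initial_segment[OF lim])
    show ?thesis by (rule limit_stage[OF h0 h1 h2 h3 h4 h5])
  qed
  have ex2: "\<forall>N. \<exists>D. \<forall>x\<in>{- R N<..<R N}. (Vl has_real_derivative fst D x) (at x) \<and>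
           (fst D has_real_derivative snd D x) (at x) \<and> (\<sigma> x)\<^sup>2 / 2 * snd D x + b x * fst D x = H x (Vl x)"
  proof
    fix N
    obtain D1 D2 where "\<forall>x\<in>{- R N<..<R N}. (Vl has_real_derivative D1 x) (at x) \<and>
           (D1 has_real_derivative D2 x) (at x) \<and> (\<sigma> x)\<^sup>2 / 2 * D2 x + b x * D1 x = H x (Vl x)"
      using loc[of N] by blast
    then show "\<exists>D. \<forall>x\<in>{- R N<..<R N}. (Vl has_real_derivative fst D x) (at x) \<and>
           (fst D has_real_derivative snd D x) (at x) \<and> (\<sigma> x)\<^sup>2 / 2 * snd D x + b x * fst D x = H x (Vl x)"
      by (intro exI[of _ "(D1, D2)"]) simp
  qed
  obtain Df where Df: "\<And>N. \<forall>x\<in>{- R N<..<R N}. (Vl has_real_derivative fst (Df N) x) (at x) \<and>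
           (fst (Df N) has_real_derivative snd (Df N) x) (at x) \<and> (\<sigma> x)\<^sup>2 / 2 * snd (Df N) x + b x * fst (Df N) x = H x (Vl x)"
    using choice[OF ex2] by blast
  define D1s where "D1s N = fst (Df N)" for N
  define D2s where "D2s N = snd (Df N)" for N
  have D: "(Vl has_real_derivative D1s N x) (at x) \<and>
           (D1s N has_real_derivative D2s N x) (at x) \<and> (\<sigma> x)\<^sup>2 / 2 * D2s N x + b x * D1s N x = H x (Vl x)"
    if "x \<in> {- R N<..<R N}" for N x
    using Df[of N] that unfolding D1s_def D2s_def by blast
  define V' where "V' x = D1s (Nx x) x" for x
  define V'' where "V'' x = D2s (Nx x) x" for x
  show ?thesis
  proof (intro exI conjI allI)
    fix x
    show "(Vl has_real_derivative V' x) (at x)" unfolding V'_def using D[OF inRo] by blast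
    show "(\<sigma> x)\<^sup>2 / 2 * V'' x + b x * V' x = H x (Vl x)" unfolding V'_def V''_def using D[OF inRo] by blast
    show "\<bar>Vl x\<bar> \<le> vb x" by (rule Vbd)
    have "(D1s (Nx x) has_real_derivative V'' x) (at x)" unfolding V''_def using D[OF inRo] by blast
    then show "(V' has_real_derivative V'' x) (at x)"
    proof (rule has_field_derivative_transform_within_open[where S = "{- R (Nx x)<..<R (Nx x)}"])
      show "open {- R (Nx x)<..<R (Nx x)}" by simp
      show "x \<in> {- R (Nx x)<..<R (Nx x)}" by (rule inRo)
      fix y assume y: "y \<in> {- R (Nx x)<..<R (Nx x)}"
      have "(Vl has_real_derivative D1s (Nx x) y) (at y)" using D[OF y] by blast
      moreover have "(Vl has_real_derivative D1s (Nx y) y) (at y)" using D[OF inRo[of y]] by blast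
      ultimately show "D1s (Nx x) y = V' y" unfolding V'_def by (rule DERIV_unique)
    qed
  qed
qed

end

lemma LC_eq: "LC f \<Longrightarrow> (\<And>x. f x = g x) \<Longrightarrow> LC g"
proof -
  assume "LC f" "\<And>x. f x = g x"
  then have "f = g" by auto
  with \<open>LC f\<close> show "LC g" by simp
qed

theorem theoremA1:
  fixes b \<sigma> f l \<phi> :: "real \<Rightarrow> real"
    and L sigma0 Lf K Ll r lam l_phi :: real
  assumes L_pos: "L > 0"
    and lip_b_sigma: "\<forall>x y. \<bar>b x - b y\<bar> + \<bar>\<sigma> x - \<sigma> y\<bar> \<le> L * \<bar>x - y\<bar>"
    and sigma0: "sigma0 > 0" "\<forall>x. \<bar>\<sigma> x\<bar> \<ge> sigma0"
    and f_nonneg: "\<forall>x. f x \<ge> 0" and f0: "f 0 = 0"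
    and f_lip: "\<forall>x y. \<bar>f x - f y\<bar> \<le> Lf * \<bar>x - y\<bar>"
    and K_pos: "K > 0" and l_inf: "\<forall>x. l x \<ge> K" "l 0 = K"
    and l_sub: "\<forall>x y. l x + l y \<ge> l (x + y) + K"
    and l_coercive: "filterlim l at_top at_infinity"
    and l_lip: "\<forall>x y. \<bar>l x - l y\<bar> \<le> Ll * \<bar>x - y\<bar>"
    and r_lo: "0 < r - (L + L\<^sup>2 / 2)"
    and r_hi: "r - (L + L\<^sup>2 / 2) < Lf / Ll"
    and lam_pos: "lam > 0"
    and phi_lip: "lipschitz_real \<phi>"
    and phi_lb: "l_phi \<ge> 0" "\<forall>x. \<phi> x \<ge> l_phi"
  shows "\<exists>V V' V''.
           (\<forall>x. (V has_real_derivative V' x) (at x)) \<and>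
           (\<forall>x. (V' has_real_derivative V'' x) (at x)) \<and>
           (\<forall>x. b x * V' x + (\<sigma> x)\<^sup>2 / 2 * V'' x - r * V x + f x
                 - lam * exp (- (\<phi> x - V x) / lam) = 0) \<and>
           (\<forall>\<alpha>. 0 < \<alpha> \<and> \<alpha> < 1 \<longrightarrow> C2_alpha_loc \<alpha> V) \<and>
           linear_growth V"
proof -
  obtain Cphi where phi_l: "\<forall>x y. \<bar>\<phi> x - \<phi> y\<bar> \<le> Cphi * \<bar>x - y\<bar>"
    using phi_lip unfolding lipschitz_real_def by blast
  have rL: "r > L"
  proof -
    have "L\<^sup>2 / 2 \<ge> 0" by simp
    then show ?thesis using r_lo by linarith
  qed
  have phi_nn: "\<forall>x. \<phi> x \<ge> 0" using phi_lb by (meson order_trans)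
  interpret h: hjb b \<sigma> f \<phi> L sigma0 Lf r lam Cphi
    by unfold_locales (use L_pos lip_b_sigma sigma0 f_nonneg f0 f_lip rL lam_pos phi_l phi_nn in auto)
  obtain V V' V'' where dV: "\<And>x. (V has_real_derivative V' x) (at x)"
    and dV': "\<And>x. (V' has_real_derivative V'' x) (at x)"
    and eqn: "\<And>x. (\<sigma> x)\<^sup>2 / 2 * V'' x + b x * V' x = h.H x (V x)"
    and bd: "\<And>x. \<bar>V x\<bar> \<le> h.vb x"
    using h.existence by blast
  have V''eq: "V'' x = 2 / (\<sigma> x)\<^sup>2 * (h.H x (V x) - b x * V' x)" for x
  proof -
    have "(\<sigma> x)\<^sup>2 / 2 * V'' x = h.H x (V x) - b x * V' x" using eqn[of x] by simp
    then show ?thesis using h.s2_pos[of x] by (simp add: field_simps)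
  qed
  have cV: "continuous_on UNIV V" by (intro continuous_at_imp_continuous_on ballI DERIV_isCont[OF dV])
  have cV': "continuous_on UNIV V'" by (intro continuous_at_imp_continuous_on ballI DERIV_isCont[OF dV'])
  have cE: "continuous_on UNIV (\<lambda>x. 2 / (\<sigma> x)\<^sup>2 * (h.H x (V x) - b x * V' x))"
    unfolding h.H_def using h.s_nz lam_pos
    by (intro continuous_intros h.cb h.cs h.cf h.cphi cV cV') auto
  have cV'': "continuous_on UNIV V''"
    by (rule continuous_on_eq[OF cE]) (simp add: V''eq)
  have LV: "LC V" by (rule LC_deriv[OF dV cV'])
  have LV': "LC V'" by (rule LC_deriv[OF dV' cV''])
  have Lb: "LC b" by (rule LC_lip) (use h.b_lip in blast)
  have Ls: "LC \<sigma>" by (rule LC_lip) (use h.s_lip in blast)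
  have Lf: "LC f" by (rule LC_lip) (use f_lip in blast)
  have Lphi: "LC \<phi>" by (rule LC_lip) (use phi_l in blast)
  have Ls2: "LC (\<lambda>x. (\<sigma> x)\<^sup>2)" by (rule LC_eq[OF LC_mult[OF Ls Ls]]) (simp add: power2_eq_square)
  have Linv: "LC (\<lambda>x. 1 / (\<sigma> x)\<^sup>2)"
    by (rule LC_inv[OF Ls2, of "sigma0\<^sup>2"]) (use sigma0 h.s2_ge in auto)
  have LH: "LC (\<lambda>x. h.H x (V x))"
  proof -
    have "LC (\<lambda>x. r * V x - f x + lam * exp ((V x - \<phi> x) * (1 / lam)))"
      by (intro LC_add LC_diff LC_mult LC_const LC_exp LV Lf Lphi)
    then show ?thesis by (rule LC_eq) (simp add: h.H_def)
  qed
  have LE: "LC (\<lambda>x. 2 * (1 / (\<sigma> x)\<^sup>2) * (h.H x (V x) - b x * V' x))"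
    by (intro LC_mult LC_const Linv LC_diff LH Lb LV')
  have LV'': "LC V''" by (rule LC_eq[OF LE]) (simp add: V''eq)
  show ?thesis
  proof (intro exI conjI allI impI)
    show "(V has_real_derivative V' x) (at x)" for x by (rule dV)
    show "(V' has_real_derivative V'' x) (at x)" for x by (rule dV')
    show "b x * V' x + (\<sigma> x)\<^sup>2 / 2 * V'' x - r * V x + f x - lam * exp (- (\<phi> x - V x) / lam) = 0" for x
      using eqn[of x] unfolding h.H_def by (simp add: algebra_simps)
    fix \<alpha> :: real assume \<alpha>: "0 < \<alpha> \<and> \<alpha> < 1"
    show "C2_alpha_loc \<alpha> V"
      unfolding C2_alpha_loc_def
      using dV dV' LC_holder[OF LV''] \<alpha> by blast
  next
    show "linear_growth V"
      unfolding linear_growth_def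
    proof (intro exI allI impI)
      fix x :: real assume x: "1 \<le> \<bar>x\<bar>"
      have "\<bar>V x\<bar> \<le> h.Ac + h.Bc * h.sb x" using bd[of x] unfolding h.vb_def .
      also have "\<dots> \<le> h.Ac + h.Bc * (1 + \<bar>x\<bar>)" using h.Bc_pos h.sb_le[of x] by simp
      also have "\<dots> \<le> (h.Ac + 2 * h.Bc) * \<bar>x\<bar>"
      proof -
        have "h.Ac \<le> h.Ac * \<bar>x\<bar>" using h.Ac_pos x by (simp add: mult_le_cancel_left1)
        moreover have "h.Bc \<le> h.Bc * \<bar>x\<bar>" using h.Bc_pos x by (simp add: mult_le_cancel_left1)
        ultimately show ?thesis by (simp add: algebra_simps)
      qed
      finally have "\<bar>V x\<bar> \<le> (h.Ac + 2 * h.Bc) * \<bar>x\<bar>" .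
      then show "\<bar>V x / x\<bar> \<le> h.Ac + 2 * h.Bc" using x by (simp add: abs_divide pos_divide_le_eq)
    qed
  qed
qed

end
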